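(* Let $G$ be a hyperbolic group acting by cubical automorphisms on a CAT$(0)$ cube complex $X$, and let $X^b$ be the cubical subdivision of $X$ (with the induced $G$--action). Then the stabilizers of hyperplanes for the $G$--action on $X$ are all quasi-convex in $G$ if and only if the stabilizers of hyperplanes for the $G$--action on $X^b$ are all quasi-convex in $G$.
   Context: The cubical subdivision $X^b$ of a cube complex $X$ is obtained by replacing each $n$--cube of $X$ by $2^n$ $n$--cubes, subdividing each coordinate interval into two equal halves, glued in the way induced from $X$. *)

theory Defs
  imports Complex_Main "HOL-Algebra.Group_Action" "HOL-Algebra.Generated_Groups"
begin

definition walk :: "('v \<Rightarrow> 'v \<Rightarrow> bool) \<Rightarrow> 'v list \<Rightarrow> bool" where
  "walk E ps \<longleftrightarrow> ps \<noteq> [] \<and> (\<forall>i < length ps - 1. E (ps ! i) (ps ! Suc i))"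

definition gdist :: "('v \<Rightarrow> 'v \<Rightarrow> bool) \<Rightarrow> 'v \<Rightarrow> 'v \<Rightarrow> nat" where
  "gdist E u v = (LEAST n. \<exists>ps. walk E ps \<and> hd ps = u \<and> last ps = v \<and> length ps = Suc n)"

text \<open>A median graph: simple connected graph on V in which every triple has a unique median.
  These are exactly the 1-skeleta of CAT(0) cube complexes (Chepoi, Roller).\<close>
definition median_graph :: "'v set \<Rightarrow> ('v \<Rightarrow> 'v \<Rightarrow> bool) \<Rightarrow> bool" where
  "median_graph V E \<longleftrightarrow>
     (\<forall>u v. E u v \<longrightarrow> u \<in> V \<and> v \<in> V \<and> E v u \<and> u \<noteq> v) \<and>
     (\<forall>u\<in>V. \<forall>v\<in>V. \<exists>ps. walk E ps \<and> hd ps = u \<and> last ps = v) \<and>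
     (\<forall>x\<in>V. \<forall>y\<in>V. \<forall>z\<in>V. \<exists>!m. m \<in> V \<and>
        gdist E x m + gdist E m y = gdist E x y \<and>
        gdist E y m + gdist E m z = gdist E y z \<and>
        gdist E x m + gdist E m z = gdist E x z)"

text \<open>A cube of dimension k: a vertex set C parametrised by the vertices of [0,1]^k
  (subsets of {..<k}) such that adjacency corresponds to differing in one coordinate.\<close>
definition cube_param :: "'v set \<Rightarrow> ('v \<Rightarrow> 'v \<Rightarrow> bool) \<Rightarrow> nat \<Rightarrow> (nat set \<Rightarrow> 'v) \<Rightarrow> 'v set \<Rightarrow> bool" where
  "cube_param V E k f C \<longleftrightarrow> C \<subseteq> V \<and> bij_betw f {x. x \<subseteq> {..<k}} C \<and>
     (\<forall>x y. x \<subseteq> {..<k} \<longrightarrow> y \<subseteq> {..<k} \<longrightarrow> (E (f x) (f y) \<longleftrightarrow> card ((x - y) \<union> (y - x)) = 1))"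

definition is_cube :: "'v set \<Rightarrow> ('v \<Rightarrow> 'v \<Rightarrow> bool) \<Rightarrow> 'v set \<Rightarrow> bool" where
  "is_cube V E C \<longleftrightarrow> (\<exists>k f. cube_param V E k f C)"

definition is_facet :: "'v set \<Rightarrow> ('v \<Rightarrow> 'v \<Rightarrow> bool) \<Rightarrow> 'v set \<Rightarrow> 'v set \<Rightarrow> bool" where
  "is_facet V E D C \<longleftrightarrow> (\<exists>k f i b. cube_param V E k f C \<and> i < k \<and>
       D = f ` {x. x \<subseteq> {..<k} \<and> (i \<in> x \<longleftrightarrow> b)})"

text \<open>1-skeleton of the cubical subdivision X^b: vertices are the cubes of X (their barycentres),
  two being adjacent iff one is a codimension-1 face of the other.\<close>
definition subdiv_verts :: "'v set \<Rightarrow> ('v \<Rightarrow> 'v \<Rightarrow> bool) \<Rightarrow> 'v set set" where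
  "subdiv_verts V E = {C. is_cube V E C}"

definition subdiv_adj :: "'v set \<Rightarrow> ('v \<Rightarrow> 'v \<Rightarrow> bool) \<Rightarrow> 'v set \<Rightarrow> 'v set \<Rightarrow> bool" where
  "subdiv_adj V E C D \<longleftrightarrow> is_facet V E D C \<or> is_facet V E C D"

definition edges :: "('v \<Rightarrow> 'v \<Rightarrow> bool) \<Rightarrow> 'v set set" where
  "edges E = {{u, v} | u v. E u v}"

definition square_opp :: "('v \<Rightarrow> 'v \<Rightarrow> bool) \<Rightarrow> 'v set \<Rightarrow> 'v set \<Rightarrow> bool" where
  "square_opp E e e' \<longleftrightarrow> (\<exists>a b c d. E a b \<and> E b c \<and> E c d \<and> E d a \<and> distinct [a, b, c, d] \<and>
       e = {a, b} \<and> e' = {d, c})"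

text \<open>Hyperplanes, represented by the set of edges they cross (parallelism classes).\<close>
definition hyperplanes :: "('v \<Rightarrow> 'v \<Rightarrow> bool) \<Rightarrow> 'v set set set" where
  "hyperplanes E = (\<lambda>e. {e'. (e, e') \<in> {(x, y). square_opp E x y}\<^sup>*}) ` edges E"

definition hyp_stab :: "('g, 'b) monoid_scheme \<Rightarrow> ('g \<Rightarrow> 'v \<Rightarrow> 'v) \<Rightarrow> 'v set set \<Rightarrow> 'g set" where
  "hyp_stab G \<psi> H = {g \<in> carrier G. (\<lambda>e. \<psi> g ` e) ` H = H}"

text \<open>Action by cubical automorphisms (= automorphisms of the 1-skeleton).\<close>
definition cubical_action :: "('g, 'b) monoid_scheme \<Rightarrow> 'v set \<Rightarrow> ('v \<Rightarrow> 'v \<Rightarrow> bool) \<Rightarrow> ('g \<Rightarrow> 'v \<Rightarrow> 'v) \<Rightarrow> bool" where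
  "cubical_action G V E \<phi> \<longleftrightarrow> group_action G V \<phi> \<and>
     (\<forall>g \<in> carrier G. \<forall>u v. E u v \<longrightarrow> E (\<phi> g u) (\<phi> g v))"

definition word_len :: "('g, 'b) monoid_scheme \<Rightarrow> 'g set \<Rightarrow> 'g \<Rightarrow> nat" where
  "word_len G S g = (LEAST n. \<exists>ws. length ws = n \<and> set ws \<subseteq> S \<union> (m_inv G) ` S \<and>
       g = foldr (\<lambda>a b. a \<otimes>\<^bsub>G\<^esub> b) ws \<one>\<^bsub>G\<^esub>)"

definition wdist :: "('g, 'b) monoid_scheme \<Rightarrow> 'g set \<Rightarrow> 'g \<Rightarrow> 'g \<Rightarrow> nat" where
  "wdist G S g h = word_len G S (m_inv G g \<otimes>\<^bsub>G\<^esub> h)"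

definition fin_gen_set :: "('g, 'b) monoid_scheme \<Rightarrow> 'g set \<Rightarrow> bool" where
  "fin_gen_set G S \<longleftrightarrow> finite S \<and> S \<subseteq> carrier G \<and> generate G S = carrier G"

definition gromov_prod :: "('g, 'b) monoid_scheme \<Rightarrow> 'g set \<Rightarrow> 'g \<Rightarrow> 'g \<Rightarrow> 'g \<Rightarrow> real" where
  "gromov_prod G S x y w = (real (wdist G S w x) + real (wdist G S w y) - real (wdist G S x y)) / 2"

text \<open>Gromov hyperbolicity of the Cayley graph, via the four-point condition on vertices.\<close>
definition hyperbolic_wrt :: "('g, 'b) monoid_scheme \<Rightarrow> 'g set \<Rightarrow> bool" where
  "hyperbolic_wrt G S \<longleftrightarrow> (\<exists>\<delta>::real. \<forall>x\<in>carrier G. \<forall>y\<in>carrier G. \<forall>z\<in>carrier G. \<forall>w\<in>carrier G.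
      gromov_prod G S x y w \<ge> min (gromov_prod G S x z w) (gromov_prod G S y z w) - \<delta>)"

definition cayley_geodesic :: "('g, 'b) monoid_scheme \<Rightarrow> 'g set \<Rightarrow> 'g list \<Rightarrow> bool" where
  "cayley_geodesic G S ps \<longleftrightarrow> ps \<noteq> [] \<and> set ps \<subseteq> carrier G \<and>
     (\<forall>i < length ps - 1. wdist G S (ps ! i) (ps ! Suc i) = 1) \<and>
     wdist G S (hd ps) (last ps) = length ps - 1"

definition quasiconvex :: "('g, 'b) monoid_scheme \<Rightarrow> 'g set \<Rightarrow> 'g set \<Rightarrow> bool" where
  "quasiconvex G S H \<longleftrightarrow> (\<exists>K::nat. \<forall>ps. cayley_geodesic G S ps \<and> hd ps \<in> H \<and> last ps \<in> H \<longrightarrow>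
       (\<forall>p \<in> set ps. \<exists>h \<in> H. wdist G S p h \<le> K))"

end

theory Submission
  imports Defs
begin

locale wg = group G for G (structure) + fixes S assumes fg: "fin_gen_set G S"
begin

abbreviation "W \<equiv> S \<union> m_inv G ` S"
definition wv :: "'a list \<Rightarrow> 'a" where "wv ws = foldr (\<lambda>a b. a \<otimes> b) ws \<one>"

lemma S_carr: "S \<subseteq> carrier G" using fg unfolding fin_gen_set_def by auto
lemma W_carr: "W \<subseteq> carrier G" using S_carr by auto

lemma wv_Nil[simp]: "wv [] = \<one>" by (simp add: wv_def)
lemma wv_Cons[simp]: "wv (a # ws) = a \<otimes> wv ws" by (simp add: wv_def)

lemma wv_carr: "set ws \<subseteq> carrier G \<Longrightarrow> wv ws \<in> carrier G"
  by (induction ws) auto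

lemma wv_append: "set ws \<subseteq> carrier G \<Longrightarrow> set vs \<subseteq> carrier G \<Longrightarrow> wv (ws @ vs) = wv ws \<otimes> wv vs"
  by (induction ws) (auto simp: m_assoc wv_carr)

lemma wv_inv: "set ws \<subseteq> carrier G \<Longrightarrow> wv (rev (map (m_inv G) ws)) = inv (wv ws)"
proof (induction ws)
  case Nil then show ?case by simp
next
  case (Cons a ws)
  have "wv (rev (map (m_inv G) (a # ws))) = wv (rev (map (m_inv G) ws) @ [inv a])" by simp
  also have "\<dots> = wv (rev (map (m_inv G) ws)) \<otimes> wv [inv a]"
    using Cons.prems by (intro wv_append) auto
  also have "\<dots> = inv (wv ws) \<otimes> inv a" using Cons by auto
  also have "\<dots> = inv (a \<otimes> wv ws)" using Cons.prems by (simp add: inv_mult_group wv_carr)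
  finally show ?case by simp
qed

lemma W_inv: "x \<in> W \<Longrightarrow> inv x \<in> W"
  using S_carr by auto

lemma gen_word: "g \<in> generate G S \<Longrightarrow> \<exists>ws. set ws \<subseteq> W \<and> g = wv ws"
proof (induction rule: generate.induct)
  case one then show ?case by (intro exI[of _ "[]"]) auto
next
  case (incl h) then show ?case by (intro exI[of _ "[h]"]) (use S_carr in auto)
next
  case (inv h) then show ?case by (intro exI[of _ "[inv h]"]) (use S_carr in auto)
next
  case (eng h1 h2)
  then obtain ws vs where "set ws \<subseteq> W" "h1 = wv ws" "set vs \<subseteq> W" "h2 = wv vs" by blast
  moreover have "wv (ws @ vs) = wv ws \<otimes> wv vs" using W_carr calculation by (intro wv_append) auto
  ultimately show ?case using W_carr by (intro exI[of _ "ws @ vs"]) auto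
qed

lemma carr_word: "g \<in> carrier G \<Longrightarrow> \<exists>ws. set ws \<subseteq> W \<and> g = wv ws"
  using fg gen_word unfolding fin_gen_set_def by auto

abbreviation "len g \<equiv> word_len G S g"

lemma word_len_alt: "word_len G S g = (LEAST n. \<exists>ws. length ws = n \<and> set ws \<subseteq> W \<and> g = wv ws)"
  unfolding word_len_def wv_def by simp

lemma len_le: "set ws \<subseteq> W \<Longrightarrow> g = wv ws \<Longrightarrow> len g \<le> length ws"
  unfolding word_len_alt by (rule Least_le) auto

lemma len_word: "g \<in> carrier G \<Longrightarrow> \<exists>ws. length ws = len g \<and> set ws \<subseteq> W \<and> g = wv ws"
  unfolding word_len_alt using carr_word by (rule_tac LeastI_ex) blast

lemma len_one: "len \<one> = 0"
  using len_le[of "[]" \<one>] by simp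

lemma len_mult: "g \<in> carrier G \<Longrightarrow> h \<in> carrier G \<Longrightarrow> len (g \<otimes> h) \<le> len g + len h"
proof -
  assume g: "g \<in> carrier G" and h: "h \<in> carrier G"
  obtain ws vs where "length ws = len g" "set ws \<subseteq> W" "g = wv ws"
    "length vs = len h" "set vs \<subseteq> W" "h = wv vs" using len_word g h by metis
  then show ?thesis using len_le[of "ws @ vs" "g \<otimes> h"] W_carr by (auto simp: wv_append)
qed

lemma len_inv: "g \<in> carrier G \<Longrightarrow> len (inv g) = len g"
proof -
  have *: "len (inv g) \<le> len g" if g: "g \<in> carrier G" for g
  proof -
    obtain ws where "length ws = len g" "set ws \<subseteq> W" "g = wv ws" using len_word g by metis
    moreover have "set (rev (map (m_inv G) ws)) \<subseteq> W" using \<open>set ws \<subseteq> W\<close> W_inv by auto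
    ultimately show ?thesis using len_le[of "rev (map (m_inv G) ws)" "inv g"] W_carr wv_inv
      by auto
  qed
  assume "g \<in> carrier G" then show ?thesis using *[of g] *[of "inv g"] by auto
qed

lemma len_zero: "g \<in> carrier G \<Longrightarrow> len g = 0 \<Longrightarrow> g = \<one>"
  using len_word by fastforce

lemma len_gen: "s \<in> W \<Longrightarrow> len s \<le> 1"
  using len_le[of "[s]" s] W_carr by auto

abbreviation "d x y \<equiv> wdist G S x y"

lemma d_def: "d x y = len (inv x \<otimes> y)" by (simp add: wdist_def)

lemma d_refl: "x \<in> carrier G \<Longrightarrow> d x x = 0" by (simp add: d_def len_one)

lemma d_sym: "x \<in> carrier G \<Longrightarrow> y \<in> carrier G \<Longrightarrow> d x y = d y x"
proof -
  assume x: "x \<in> carrier G" and y: "y \<in> carrier G"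
  have "inv (inv x \<otimes> y) = inv y \<otimes> x" using x y by (simp add: inv_mult_group)
  then show ?thesis using len_inv[of "inv x \<otimes> y"] x y by (simp add: d_def)
qed

lemma d_tri: "x \<in> carrier G \<Longrightarrow> y \<in> carrier G \<Longrightarrow> z \<in> carrier G \<Longrightarrow> d x z \<le> d x y + d y z"
proof -
  assume x: "x \<in> carrier G" and y: "y \<in> carrier G" and z: "z \<in> carrier G"
  have "inv x \<otimes> z = (inv x \<otimes> y) \<otimes> (inv y \<otimes> z)" using x y z
    by (simp add: m_assoc[symmetric]) (simp add: m_assoc r_inv)
  then show ?thesis using len_mult[of "inv x \<otimes> y" "inv y \<otimes> z"] x y z by (simp add: d_def)
qed

lemma d_zero: "x \<in> carrier G \<Longrightarrow> y \<in> carrier G \<Longrightarrow> d x y = 0 \<Longrightarrow> x = y"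
  using len_zero[of "inv x \<otimes> y"] by (simp add: d_def) (metis inv_equality inv_inv inv_closed)


lemma geo_le:
  assumes g: "cayley_geodesic G S ps" and ij: "i \<le> j" "j < length ps"
  shows "d (ps!i) (ps!j) \<le> j - i"
  using ij
proof (induction j)
  case 0
  then have "ps!0 \<in> carrier G" using g by (auto simp: cayley_geodesic_def)
  then show ?case using 0 by (simp add: d_refl)
next
  case (Suc j)
  have carr: "\<And>k. k < length ps \<Longrightarrow> ps!k \<in> carrier G" using g by (auto simp: cayley_geodesic_def)
  show ?case
  proof (cases "i = Suc j")
    case True then show ?thesis using carr Suc by (simp add: d_refl)
  next
    case False
    then have "d (ps!i) (ps!j) \<le> j - i" using Suc by auto
    moreover have "d (ps!j) (ps!Suc j) = 1" using g Suc.prems by (auto simp: cayley_geodesic_def)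
    moreover have "d (ps!i) (ps!Suc j) \<le> d (ps!i) (ps!j) + d (ps!j) (ps!Suc j)"
      using carr Suc.prems by (intro d_tri) auto
    ultimately show ?thesis using False Suc.prems by linarith
  qed
qed

lemma geo_dist:
  assumes g: "cayley_geodesic G S ps" and i: "i < length ps"
  shows "d (hd ps) (ps!i) = i" "d (ps!i) (last ps) = length ps - 1 - i"
proof -
  have ne: "ps \<noteq> []" using g by (simp add: cayley_geodesic_def)
  have carr: "\<And>k. k < length ps \<Longrightarrow> ps!k \<in> carrier G" using g by (auto simp: cayley_geodesic_def)
  have h: "hd ps = ps!0" using ne by (simp add: hd_conv_nth)
  have l: "last ps = ps!(length ps - 1)" using ne by (simp add: last_conv_nth)
  have a: "d (ps!0) (ps!i) \<le> i" using geo_le[OF g, of 0 i] i by simp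
  have b: "d (ps!i) (ps!(length ps - 1)) \<le> length ps - 1 - i" using geo_le[OF g, of i "length ps - 1"] i ne by simp
  have t: "d (ps!0) (ps!(length ps - 1)) \<le> d (ps!0) (ps!i) + d (ps!i) (ps!(length ps - 1))"
    using carr i ne by (intro d_tri) auto
  have n: "d (ps!0) (ps!(length ps - 1)) = length ps - 1" using g h l by (simp add: cayley_geodesic_def)
  show "d (hd ps) (ps!i) = i" "d (ps!i) (last ps) = length ps - 1 - i" unfolding h l using a b t n i by linarith+
qed

lemma geo_exists:
  assumes x: "x \<in> carrier G" and y: "y \<in> carrier G"
  shows "\<exists>ps. cayley_geodesic G S ps \<and> hd ps = x \<and> last ps = y"
proof -
  obtain ws where ws: "length ws = len (inv x \<otimes> y)" "set ws \<subseteq> W" "inv x \<otimes> y = wv ws"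
    using len_word[of "inv x \<otimes> y"] x y by auto
  define n where "n = length ws"
  define ps where "ps = map (\<lambda>i. x \<otimes> wv (take i ws)) [0..<Suc n]"
  have wsc: "set ws \<subseteq> carrier G" using ws W_carr by auto
  have tc: "\<And>i. set (take i ws) \<subseteq> carrier G" using wsc by (meson set_take_subset subset_trans)
  have len: "length ps = Suc n" by (simp add: ps_def)
  have nth: "\<And>i. i \<le> n \<Longrightarrow> ps!i = x \<otimes> wv (take i ws)" by (simp add: ps_def nth_append del: upt_Suc)
  have "ps \<noteq> []" using len by auto
  then have hd: "hd ps = x" using nth[of 0] len x by (simp add: hd_conv_nth)
  have "x \<otimes> wv ws = y" using ws(3)[symmetric] x y by (simp add: m_assoc[symmetric])
  then have last: "last ps = y" using nth[of n] len n_def \<open>ps \<noteq> []\<close>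
    by (simp add: last_conv_nth)
  have carr: "set ps \<subseteq> carrier G" using x tc by (auto simp: ps_def intro!: wv_carr)
  have step: "d (ps!i) (ps!Suc i) = 1" if i: "i < n" for i
  proof -
    define s where "s = ws!i"
    have sW: "s \<in> W" using ws i n_def s_def by (meson nth_mem subsetD)
    have sc: "s \<in> carrier G" using sW W_carr by auto
    have "take (Suc i) ws = take i ws @ [s]" using i n_def s_def by (simp add: take_Suc_conv_app_nth)
    then have "wv (take (Suc i) ws) = wv (take i ws) \<otimes> s"
      using wv_append[of "take i ws" "[s]"] tc sc by simp
    then have "d (ps!i) (ps!Suc i) = len s"
      using nth[of i] nth[of "Suc i"] i x tc[of i] sc wv_carr[OF tc[of i]]
      by (simp add: d_def inv_mult_group m_assoc[symmetric]) (simp add: m_assoc)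
    moreover have "len s \<noteq> 0"
    proof
      assume "len s = 0"
      then have s1: "s = \<one>" using len_zero sc by auto
      have dc: "set (drop (Suc i) ws) \<subseteq> carrier G" using wsc by (meson set_drop_subset subset_trans)
      have "wv ws = wv (take i ws @ [s] @ drop (Suc i) ws)" using i n_def s_def id_take_nth_drop[of i ws] by simp
      also have "\<dots> = wv (take i ws) \<otimes> (s \<otimes> wv (drop (Suc i) ws))"
        using tc sc wsc by (subst wv_append) (auto dest: in_set_dropD)
      also have "\<dots> = wv (take i ws @ drop (Suc i) ws)"
        using s1 wv_carr[OF dc] wv_append[OF tc dc] by simp
      finally have eq: "inv x \<otimes> y = wv (take i ws @ drop (Suc i) ws)" using ws(3) by simp
      have "set (take i ws @ drop (Suc i) ws) \<subseteq> W" using ws(2)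
        by (metis set_append Un_subset_iff set_take_subset set_drop_subset subset_trans)
      then have "len (inv x \<otimes> y) \<le> length (take i ws @ drop (Suc i) ws)"
        using eq by (rule len_le)
      then show False using ws i n_def by simp
    qed
    ultimately show ?thesis using len_gen[OF sW] by simp
  qed
  have "cayley_geodesic G S ps"
    unfolding cayley_geodesic_def using len carr step hd last ws n_def by (auto simp: d_def)
  then show ?thesis using hd last by auto
qed


lemma dtri_r: "x \<in> carrier G \<Longrightarrow> y \<in> carrier G \<Longrightarrow> z \<in> carrier G \<Longrightarrow> real (d x z) \<le> real (d x y) + real (d y z)"
  using d_tri[of x y z] by (metis of_nat_add of_nat_le_iff)

lemma fellow:
  assumes hyp: "\<forall>x\<in>carrier G. \<forall>y\<in>carrier G. \<forall>z\<in>carrier G. \<forall>w\<in>carrier G.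
      gromov_prod G S x y w \<ge> min (gromov_prod G S x z w) (gromov_prod G S y z w) - \<delta>"
    and g1: "cayley_geodesic G S ps" and g2: "cayley_geodesic G S qs"
    and R1: "d (hd ps) (hd qs) \<le> R" and R2: "d (last ps) (last qs) \<le> R" and p: "p \<in> set ps"
  shows "\<exists>q\<in>set qs. real (d p q) \<le> 2 * real R + 2 * \<delta> + 1"
proof -
  define x where "x = hd ps"
  define y where "y = last ps"
  define x' where "x' = hd qs"
  define y' where "y' = last qs"
  have ne1: "ps \<noteq> []" and ne2: "qs \<noteq> []" using g1 g2 by (auto simp: cayley_geodesic_def)
  have c1: "set ps \<subseteq> carrier G" and c2: "set qs \<subseteq> carrier G" using g1 g2 by (auto simp: cayley_geodesic_def)
  have xc: "x \<in> carrier G" "y \<in> carrier G" "x' \<in> carrier G" "y' \<in> carrier G" "p \<in> carrier G"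
    using c1 c2 ne1 ne2 p by (auto simp: x_def y_def x'_def y'_def)
  obtain i where i: "i < length ps" "p = ps!i" using p by (metis in_set_conv_nth)
  have pxy: "real (d x p) + real (d p y) = real (d x y)"
    using geo_dist[OF g1 i(1)] g1 i unfolding x_def y_def cayley_geodesic_def by auto
  define n' where "n' = length qs - 1"
  have n': "d x' y' = n'" using g2 by (simp add: cayley_geodesic_def x'_def y'_def n'_def)
  define t where "t = gromov_prod G S p y' x'"
  have t: "t = (real (d x' p) + real (d x' y') - real (d p y')) / 2"
    by (simp add: t_def gromov_prod_def)
  have s1: "d x' p = d p x'" "d p y' = d y' p" "d x x' = d x' x" "d y y' = d y' y"
    using xc by (auto intro: d_sym)
  have t0: "t \<ge> 0" using dtri_r[of p x' y'] xc s1 t by simp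
  have t1: "t \<le> real n'" using dtri_r[of x' y' p] xc s1 t n' by simp
  define m where "m = nat \<lfloor>t\<rfloor>"
  have m1: "real m \<le> t" "t < real m + 1" using t0 by (simp_all add: m_def)
  have mn: "m \<le> n'" using m1 t1 by linarith
  define q where "q = qs!m"
  have ml: "m < length qs" using mn ne2 n'_def by (cases qs) auto
  have q: "q \<in> set qs" using ml by (simp add: q_def)
  have qc: "q \<in> carrier G" using q c2 by auto
  have dq: "d x' q = m" "d q y' = n' - m" using geo_dist[OF g2 ml] by (simp_all add: x'_def y'_def q_def n'_def)
  have H: "gromov_prod G S p q x' \<ge> min (gromov_prod G S p y' x') (gromov_prod G S q y' x') - \<delta>"
    using hyp xc qc by blast
  have gq: "gromov_prod G S q y' x' = real m" using dq mn n' by (simp add: gromov_prod_def)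
  have gp: "gromov_prod G S p q x' = (real (d x' p) + real m - real (d p q)) / 2"
    using dq by (simp add: gromov_prod_def)
  have "min (gromov_prod G S p y' x') (gromov_prod G S q y' x') = real m"
    using gq m1 t_def by simp
  then have A: "real (d p q) \<le> real (d x' p) - real m + 2 * \<delta>" using H gp by simp
  have B1: "real (d x' p) \<le> real R + real (d x p)" using dtri_r[of x' x p] xc s1 R1 x_def x'_def by simp
  have B2: "real (d p y') \<le> real (d p y) + real R" using dtri_r[of p y y'] xc R2 y_def y'_def by simp
  have B3: "real (d x y) \<le> real R + real (d x' y') + real R"
    using dtri_r[of x x' y] dtri_r[of x' y' y] xc s1 R1 R2 x_def x'_def y_def y'_def by simp
  have C: "real (d x' p) - t \<le> 2 * real R"
    unfolding t using B1 B2 B3 pxy by (simp add: field_simps)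
  have "real (d p q) \<le> 2 * real R + 2 * \<delta> + 1"
    using A C m1 by linarith
  then show ?thesis using q by blast
qed


lemma qc_transfer:
  assumes hypb: "hyperbolic_wrt G S"
    and BA: "B \<subseteq> A" and Ac: "A \<subseteq> carrier G" and close: "\<forall>a\<in>A. \<exists>b\<in>B. d a b \<le> R"
  shows "quasiconvex G S A \<longleftrightarrow> quasiconvex G S B"
proof
  assume "quasiconvex G S A"
  then obtain K where K: "\<forall>ps. cayley_geodesic G S ps \<and> hd ps \<in> A \<and> last ps \<in> A \<longrightarrow>
       (\<forall>p \<in> set ps. \<exists>h \<in> A. d p h \<le> K)" unfolding quasiconvex_def by blast
  show "quasiconvex G S B" unfolding quasiconvex_def
  proof (intro exI[of _ "K + R"] allI impI ballI)
    fix ps p assume ps: "cayley_geodesic G S ps \<and> hd ps \<in> B \<and> last ps \<in> B" and p: "p \<in> set ps"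
    then obtain a where a: "a \<in> A" "d p a \<le> K" using K BA by blast
    then obtain b where b: "b \<in> B" "d a b \<le> R" using close by blast
    have "p \<in> carrier G" using ps p by (auto simp: cayley_geodesic_def)
    then have "d p b \<le> d p a + d a b" using a b Ac BA by (intro d_tri) auto
    then show "\<exists>h\<in>B. d p h \<le> K + R" using a b by (intro bexI[of _ b]) auto
  qed
next
  assume "quasiconvex G S B"
  then obtain K where K: "\<forall>ps. cayley_geodesic G S ps \<and> hd ps \<in> B \<and> last ps \<in> B \<longrightarrow>
       (\<forall>p \<in> set ps. \<exists>h \<in> B. d p h \<le> K)" unfolding quasiconvex_def by blast
  obtain \<delta> where hyp: "\<forall>x\<in>carrier G. \<forall>y\<in>carrier G. \<forall>z\<in>carrier G. \<forall>w\<in>carrier G.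
      gromov_prod G S x y w \<ge> min (gromov_prod G S x z w) (gromov_prod G S y z w) - \<delta>"
    using hypb unfolding hyperbolic_wrt_def by blast
  define C where "C = nat \<lceil>2 * real R + 2 * \<delta> + 1\<rceil>"
  show "quasiconvex G S A" unfolding quasiconvex_def
  proof (intro exI[of _ "C + K"] allI impI ballI)
    fix ps p assume ps: "cayley_geodesic G S ps \<and> hd ps \<in> A \<and> last ps \<in> A" and p: "p \<in> set ps"
    obtain b1 where b1: "b1 \<in> B" "d (hd ps) b1 \<le> R" using close ps by blast
    obtain b2 where b2: "b2 \<in> B" "d (last ps) b2 \<le> R" using close ps by blast
    obtain qs where qs: "cayley_geodesic G S qs" "hd qs = b1" "last qs = b2"
      using geo_exists[of b1 b2] b1 b2 BA Ac by blast
    obtain q where q: "q \<in> set qs" "real (d p q) \<le> 2 * real R + 2 * \<delta> + 1"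
      using fellow[OF hyp, of ps qs R p] ps qs b1 b2 p by auto
    have "d p q \<le> C" using q(2) unfolding C_def by linarith
    obtain b where b: "b \<in> B" "d q b \<le> K" using K qs q b1 b2 by blast
    have "p \<in> carrier G" "q \<in> carrier G" "b \<in> carrier G"
      using ps p qs q b BA Ac by (auto simp: cayley_geodesic_def)
    then have "d p b \<le> d p q + d q b" by (intro d_tri) auto
    then show "\<exists>h\<in>A. d p h \<le> C + K" using b \<open>d p q \<le> C\<close> BA by (intro bexI[of _ b]) auto
  qed
qed

end


definition flip :: "nat set \<Rightarrow> nat \<Rightarrow> nat set" where
  "flip x i = (if i \<in> x then x - {i} else insert i x)"

abbreviation sd :: "nat set \<Rightarrow> nat set \<Rightarrow> nat set" where
  "sd x y \<equiv> (x - y) \<union> (y - x)"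

lemma flip_sub: "x \<subseteq> I \<Longrightarrow> i \<in> I \<Longrightarrow> flip x i \<subseteq> I" by (auto simp: flip_def)
lemma flip_flip[simp]: "flip (flip x i) i = x" by (auto simp: flip_def)
lemma flip_mem: "j \<in> flip x i \<longleftrightarrow> (if j = i then i \<notin> x else j \<in> x)" by (auto simp: flip_def)
lemma flip_neq: "flip x i \<noteq> x" by (auto simp: flip_def)
lemma sd_flip: "sd x (flip x i) = {i}" by (auto simp: flip_def)
lemma sd_flip2: "sd u (flip a j) = (if j \<in> sd u a then sd u a - {j} else insert j (sd u a))"
  by (auto simp: flip_def)
lemma sd_comm: "sd x y = sd y x" by auto
lemma flip_comm: "flip (flip x i) j = flip (flip x j) i" by (auto simp: flip_def)
lemma sd_flip_flip: "i \<noteq> j \<Longrightarrow> sd (flip x i) (flip x j) = {i, j}" by (auto simp: flip_def)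
lemma flip_flip_neq: "a \<noteq> a' \<Longrightarrow> flip (flip u a) a' \<noteq> u" by (auto simp: flip_def)
lemma flip_neq2: "i \<noteq> j \<Longrightarrow> flip x i \<noteq> flip x j" by (auto simp: flip_def)

lemma sd_one: "card (sd x z) = 1 \<Longrightarrow> \<exists>j. z = flip x j \<and> j \<in> sd x z"
proof -
  assume "card (sd x z) = 1"
  then obtain j where j: "sd x z = {j}" by (rule card_1_singletonE)
  have *: "(y \<in> x \<and> y \<notin> z \<or> y \<in> z \<and> y \<notin> x) \<longleftrightarrow> y = j" for y
  proof -
    have "y \<in> sd x z \<longleftrightarrow> y \<in> {j}" using j by simp
    then show ?thesis by simp
  qed
  have "y \<in> z \<longleftrightarrow> y \<in> flip x j" for y using *[of y] *[of j]
    by (cases "y = j"; simp add: flip_def; blast)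
  then have "z = flip x j" by blast
  moreover have "j \<in> sd x z" using j by simp
  ultimately show ?thesis by blast
qed

lemma sd_half: "finite u \<Longrightarrow> finite a \<Longrightarrow>
   card (sd u a) < card (sd u (flip a j)) \<longleftrightarrow> (j \<in> u \<longleftrightarrow> j \<in> a)"
proof -
  assume f: "finite u" "finite a"
  define T where "T = sd u a"
  have fs: "finite T" using f by (simp add: T_def)
  have e: "sd u (flip a j) = (if j \<in> T then T - {j} else insert j T)" unfolding T_def by (rule sd_flip2)
  have jT: "j \<in> T \<longleftrightarrow> \<not> (j \<in> u \<longleftrightarrow> j \<in> a)" unfolding T_def by blast
  show ?thesis
  proof (cases "j \<in> T")
    case True
    then have "card (sd u (flip a j)) = card T - 1" using fs e by (simp add: card_Diff_singleton)
    moreover have "card T > 0" using True fs card_gt_0_iff by blast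
    ultimately show ?thesis using True jT unfolding T_def by linarith
  next
    case False
    then have "card (sd u (flip a j)) = Suc (card T)" using fs e by simp
    then show ?thesis using False jT unfolding T_def by linarith
  qed
qed

lemma card_Pow_slice:
  assumes I: "finite I" and K: "K \<subseteq> I" and s: "s \<subseteq> K"
  shows "card {x. x \<subseteq> I \<and> x \<inter> K = s} = 2 ^ (card I - card K)"
proof -
  have "bij_betw (\<lambda>y. y \<union> s) (Pow (I - K)) {x. x \<subseteq> I \<and> x \<inter> K = s}"
    unfolding bij_betw_def
  proof
    show "inj_on (\<lambda>y. y \<union> s) (Pow (I - K))" using s by (auto simp: inj_on_def)
    show "(\<lambda>y. y \<union> s) ` Pow (I - K) = {x. x \<subseteq> I \<and> x \<inter> K = s}"
    proof
      show "(\<lambda>y. y \<union> s) ` Pow (I - K) \<subseteq> {x. x \<subseteq> I \<and> x \<inter> K = s}" using s K by auto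
      show "{x. x \<subseteq> I \<and> x \<inter> K = s} \<subseteq> (\<lambda>y. y \<union> s) ` Pow (I - K)"
      proof
        fix x assume "x \<in> {x. x \<subseteq> I \<and> x \<inter> K = s}"
        then have "x = (x - K) \<union> s" "x - K \<in> Pow (I - K)" by auto
        then show "x \<in> (\<lambda>y. y \<union> s) ` Pow (I - K)" by blast
      qed
    qed
  qed
  then have "card {x. x \<subseteq> I \<and> x \<inter> K = s} = card (Pow (I - K))" by (simp add: bij_betw_same_card)
  also have "\<dots> = 2 ^ (card I - card K)" using I K by (simp add: card_Pow card_Diff_subset finite_subset)
  finally show ?thesis .
qed

locale mg =
  fixes V :: "'v set" and E :: "'v \<Rightarrow> 'v \<Rightarrow> bool"
  assumes med: "median_graph V E"
begin

lemma E_V: "E u v \<Longrightarrow> u \<in> V \<and> v \<in> V" using med unfolding median_graph_def by blast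
lemma E_sym: "E u v \<Longrightarrow> E v u" using med unfolding median_graph_def by blast
lemma E_irr: "E u v \<Longrightarrow> u \<noteq> v" using med unfolding median_graph_def by blast

definition gcube :: "nat set \<Rightarrow> (nat set \<Rightarrow> 'v) \<Rightarrow> 'v set \<Rightarrow> bool" where
  "gcube I f C \<longleftrightarrow> finite I \<and> C \<subseteq> V \<and> bij_betw f (Pow I) C \<and>
     (\<forall>x y. x \<subseteq> I \<longrightarrow> y \<subseteq> I \<longrightarrow> (E (f x) (f y) \<longleftrightarrow> card (sd x y) = 1))"

definition half :: "(nat set \<Rightarrow> 'v) \<Rightarrow> nat set \<Rightarrow> nat \<Rightarrow> bool \<Rightarrow> 'v set" where
  "half f I i b = f ` {x. x \<subseteq> I \<and> (i \<in> x \<longleftrightarrow> b)}"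

lemma cube_param_gcube: "cube_param V E k f C \<longleftrightarrow> gcube {..<k} f C"
  unfolding cube_param_def gcube_def Pow_def by auto

lemma gcube_E: "gcube I f C \<Longrightarrow> x \<subseteq> I \<Longrightarrow> y \<subseteq> I \<Longrightarrow> E (f x) (f y) \<longleftrightarrow> card (sd x y) = 1"
  unfolding gcube_def by blast

lemma gcube_inj: "gcube I f C \<Longrightarrow> x \<subseteq> I \<Longrightarrow> y \<subseteq> I \<Longrightarrow> f x = f y \<longleftrightarrow> x = y"
  unfolding gcube_def bij_betw_def inj_on_def by blast

lemma gcube_img: "gcube I f C \<Longrightarrow> C = f ` Pow I"
  unfolding gcube_def bij_betw_def by blast

lemma gcube_fin: "gcube I f C \<Longrightarrow> finite I" unfolding gcube_def by blast

lemma gcube_V: "gcube I f C \<Longrightarrow> C \<subseteq> V" unfolding gcube_def by blast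

lemma gcube_card: "gcube I f C \<Longrightarrow> card C = 2 ^ card I \<and> finite C"
  unfolding gcube_def using bij_betw_same_card[of f "Pow I" C] bij_betw_finite[of f "Pow I" C]
  by (auto simp: card_Pow)

lemma half_alt: "{x. x \<subseteq> I \<and> (i \<in> x \<longleftrightarrow> b)} = {x. x \<subseteq> I \<and> x \<inter> {i} = (if b then {i} else {})}"
  by auto

lemma half_card: "gcube I f C \<Longrightarrow> i \<in> I \<Longrightarrow> card (half f I i b) = 2 ^ (card I - 1)"
proof -
  assume g: "gcube I f C" and i: "i \<in> I"
  have "inj_on f {x. x \<subseteq> I \<and> (i \<in> x \<longleftrightarrow> b)}" using g unfolding gcube_def bij_betw_def
    by (rule_tac inj_on_subset) auto
  then have "card (half f I i b) = card {x. x \<subseteq> I \<and> (i \<in> x \<longleftrightarrow> b)}" unfolding half_def by (rule card_image)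
  also have "\<dots> = 2 ^ (card I - 1)" unfolding half_alt using card_Pow_slice[of I "{i}"] g i gcube_fin by auto
  finally show ?thesis .
qed

lemma half_sub: "gcube I f C \<Longrightarrow> half f I i b \<subseteq> C"
  unfolding half_def using gcube_img by blast

lemma half_inter_card:
  assumes g: "gcube I f C" and ij: "i \<in> I" "j \<in> I" "i \<noteq> j"
  shows "card (half f I i b \<inter> half f I j c) = 2 ^ (card I - 2)"
proof -
  have "half f I i b \<inter> half f I j c \<subseteq> f ` {x. x \<subseteq> I \<and> (i \<in> x \<longleftrightarrow> b) \<and> (j \<in> x \<longleftrightarrow> c)}"
  proof
    fix v assume "v \<in> half f I i b \<inter> half f I j c"
    then obtain x y where xy: "x \<subseteq> I" "i\<in>x\<longleftrightarrow>b" "v = f x" "y \<subseteq> I" "j\<in>y\<longleftrightarrow>c" "v = f y"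
      unfolding half_def by blast
    then have "x = y" using gcube_inj[OF g] by metis
    then show "v \<in> f ` {x. x \<subseteq> I \<and> (i \<in> x \<longleftrightarrow> b) \<and> (j \<in> x \<longleftrightarrow> c)}" using xy by blast
  qed
  moreover have "f ` {x. x \<subseteq> I \<and> (i \<in> x \<longleftrightarrow> b) \<and> (j \<in> x \<longleftrightarrow> c)} \<subseteq> half f I i b \<inter> half f I j c"
    unfolding half_def by blast
  ultimately have e1: "half f I i b \<inter> half f I j c = f ` {x. x \<subseteq> I \<and> (i \<in> x \<longleftrightarrow> b) \<and> (j \<in> x \<longleftrightarrow> c)}"
    by blast
  have e2: "inj_on f {x. x \<subseteq> I \<and> (i \<in> x \<longleftrightarrow> b) \<and> (j \<in> x \<longleftrightarrow> c)}" using g unfolding gcube_def bij_betw_def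
    by (rule_tac inj_on_subset) auto
  have e3: "{x. x \<subseteq> I \<and> (i \<in> x \<longleftrightarrow> b) \<and> (j \<in> x \<longleftrightarrow> c)} =
      {x. x \<subseteq> I \<and> x \<inter> {i, j} = (if b then {i} else {}) \<union> (if c then {j} else {})}"
    using ij(3) by (cases b; cases c) auto
  have e4: "card {x. x \<subseteq> I \<and> x \<inter> {i, j} = (if b then {i} else {}) \<union> (if c then {j} else {})}
      = 2 ^ (card I - 2)"
  proof -
    have s: "(if b then {i} else {}) \<union> (if c then {j} else {}) \<subseteq> {i,j}" by auto
    have k: "{i,j} \<subseteq> I" using ij by auto
    have c2: "card {i,j} = 2" using ij by simp
    show ?thesis using card_Pow_slice[OF gcube_fin[OF g] k s] unfolding c2 .
  qed
  have "card (half f I i b \<inter> half f I j c) = card {x. x \<subseteq> I \<and> (i \<in> x \<longleftrightarrow> b) \<and> (j \<in> x \<longleftrightarrow> c)}"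
    by (simp only: e1 card_image[OF e2])
  then show ?thesis by (simp only: e3 e4)
qed


lemma ham_le:
  assumes finB: "finite B" and mp: "\<And>x. x \<subseteq> A \<Longrightarrow> \<tau> x \<subseteq> B"
    and adj: "\<And>x y. x \<subseteq> A \<Longrightarrow> y \<subseteq> A \<Longrightarrow> card (sd x y) = 1 \<Longrightarrow> card (sd (\<tau> x) (\<tau> y)) = 1"
    and finA: "finite A"
  shows "x \<subseteq> A \<Longrightarrow> y \<subseteq> A \<Longrightarrow> card (sd (\<tau> x) (\<tau> y)) \<le> card (sd x y)"
proof (induction "card (sd x y)" arbitrary: x)
  case 0
  have "finite (sd x y)" using 0 finA by (meson finite_Diff finite_UnI finite_subset)
  then have "sd x y = {}" using 0 by simp
  then have "x = y" by blast
  then show ?case by simp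
next
  case (Suc m)
  have fsd: "finite (sd x y)" using Suc.prems finA by (meson finite_Diff finite_UnI finite_subset)
  then obtain t where t: "t \<in> sd x y" using Suc(2) by (metis card.empty ex_in_conv nat.distinct(1))
  define z where "z = flip x t"
  have zA: "z \<subseteq> A" using t Suc.prems unfolding z_def by (intro flip_sub) auto
  have "sd y z = sd y x - {t}" using t unfolding z_def by (simp add: sd_flip2 sd_comm)
  then have "sd z y = sd x y - {t}" by (simp add: sd_comm)
  then have "card (sd z y) = m" using Suc(2) t fsd by simp
  then have IH: "card (sd (\<tau> z) (\<tau> y)) \<le> m" using Suc zA by blast
  have "card (sd x z) = 1" unfolding z_def sd_flip by simp
  then have a1: "card (sd (\<tau> x) (\<tau> z)) = 1" using adj Suc.prems zA by blast
  have "sd (\<tau> x) (\<tau> y) \<subseteq> sd (\<tau> x) (\<tau> z) \<union> sd (\<tau> z) (\<tau> y)" by blast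
  moreover have "finite (sd (\<tau> x) (\<tau> z) \<union> sd (\<tau> z) (\<tau> y))"
    using mp Suc.prems zA finB finite_subset by (metis finite_Diff finite_UnI)
  ultimately have "card (sd (\<tau> x) (\<tau> y)) \<le> card (sd (\<tau> x) (\<tau> z) \<union> sd (\<tau> z) (\<tau> y))"
    by (rule card_mono[rotated])
  also have "\<dots> \<le> card (sd (\<tau> x) (\<tau> z)) + card (sd (\<tau> z) (\<tau> y))" by (rule card_Un_le)
  finally show ?case using a1 IH Suc(2) by linarith
qed

lemma PI:
  assumes f: "gcube I f C" and g: "gcube J g C" and j: "j \<in> J"
  shows "\<exists>i\<in>I. \<exists>b. half g J j c = half f I i b"
proof -
  define \<sigma> where "\<sigma> u = inv_into (Pow I) f (g u)" for u
  define \<tau> where "\<tau> x = inv_into (Pow J) g (f x)" for x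
  have CI: "C = f ` Pow I" and CJ: "C = g ` Pow J" using gcube_img f g by auto
  have s1: "\<sigma> u \<subseteq> I \<and> f (\<sigma> u) = g u" if "u \<subseteq> J" for u
  proof -
    have "g u \<in> f ` Pow I" using that CI CJ by blast
    then show ?thesis unfolding \<sigma>_def using inv_into_into[of "g u" f "Pow I"] f_inv_into_f[of "g u" f "Pow I"] by auto
  qed
  have t1: "\<tau> x \<subseteq> J \<and> g (\<tau> x) = f x" if "x \<subseteq> I" for x
  proof -
    have "f x \<in> g ` Pow J" using that CI CJ by blast
    then show ?thesis unfolding \<tau>_def using inv_into_into[of "f x" g "Pow J"] f_inv_into_f[of "f x" g "Pow J"] by auto
  qed
  have ts: "\<tau> (\<sigma> u) = u" if "u \<subseteq> J" for u
    using s1[OF that] t1[of "\<sigma> u"] gcube_inj[OF g, of "\<tau> (\<sigma> u)" u] that by auto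
  have st: "\<sigma> (\<tau> x) = x" if "x \<subseteq> I" for x
    using t1[OF that] s1[of "\<tau> x"] gcube_inj[OF f, of "\<sigma> (\<tau> x)" x] that by auto
  have finI: "finite I" and finJ: "finite J" using f g gcube_fin by auto
  have adj\<sigma>: "card (sd (\<sigma> u) (\<sigma> u')) = 1" if "u \<subseteq> J" "u' \<subseteq> J" "card (sd u u') = 1" for u u'
    using gcube_E[OF g that(1,2)] gcube_E[OF f, of "\<sigma> u" "\<sigma> u'"] s1 that by auto
  have adj\<tau>: "card (sd (\<tau> x) (\<tau> x')) = 1" if "x \<subseteq> I" "x' \<subseteq> I" "card (sd x x') = 1" for x x'
    using gcube_E[OF f that(1,2)] gcube_E[OF g, of "\<tau> x" "\<tau> x'"] t1 that by auto
  have ham: "card (sd (\<sigma> u) (\<sigma> u')) = card (sd u u')" if "u \<subseteq> J" "u' \<subseteq> J" for u u'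
  proof -
    have m1: "\<And>x. x \<subseteq> J \<Longrightarrow> \<sigma> x \<subseteq> I" using s1 by blast
    have m2: "\<And>x. x \<subseteq> I \<Longrightarrow> \<tau> x \<subseteq> J" using t1 by blast
    have "card (sd (\<sigma> u) (\<sigma> u')) \<le> card (sd u u')"
      by (rule ham_le[where B=I and A=J and \<tau>=\<sigma>, OF finI m1 adj\<sigma> finJ that])
    moreover have "card (sd (\<tau> (\<sigma> u)) (\<tau> (\<sigma> u'))) \<le> card (sd (\<sigma> u) (\<sigma> u'))"
      by (rule ham_le[where B=J and A=I and \<tau>=\<tau>, OF finJ m2 adj\<tau> finI m1[OF that(1)] m1[OF that(2)]])
    ultimately show ?thesis using ts that by simp
  qed
  define u0 where "u0 = (if c then {j} else {})"
  define u1 where "u1 = flip u0 j"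
  have u0: "u0 \<subseteq> J" "j \<in> u0 \<longleftrightarrow> c" using j by (auto simp: u0_def)
  have u1: "u1 \<subseteq> J" using u0 j by (simp add: u1_def flip_sub)
  have "card (sd u0 u1) = 1" unfolding u1_def sd_flip by simp
  then have "card (sd (\<sigma> u0) (\<sigma> u1)) = 1" using adj\<sigma> u0 u1 by blast
  then obtain i where i: "\<sigma> u1 = flip (\<sigma> u0) i" "i \<in> sd (\<sigma> u0) (\<sigma> u1)" using sd_one by blast
  have iI: "i \<in> I" using i(2) s1 u0 u1 by blast
  define b where "b = (i \<in> \<sigma> u0)"
  have key: "(j \<in> u \<longleftrightarrow> c) \<longleftrightarrow> (i \<in> \<sigma> u \<longleftrightarrow> b)" if u: "u \<subseteq> J" for u
  proof -
    have fu: "finite u" "finite u0" "finite (\<sigma> u)" "finite (\<sigma> u0)"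
      using u u0 s1 finI finJ finite_subset by metis+
    have "(j \<in> u \<longleftrightarrow> c) \<longleftrightarrow> card (sd u u0) < card (sd u u1)"
      using sd_half[OF fu(1,2), of j] u0 by (simp add: u1_def)
    also have "\<dots> \<longleftrightarrow> card (sd (\<sigma> u) (\<sigma> u0)) < card (sd (\<sigma> u) (\<sigma> u1))"
      using ham[OF u u0(1)] ham[OF u u1] by simp
    also have "\<dots> \<longleftrightarrow> (i \<in> \<sigma> u \<longleftrightarrow> b)"
      using sd_half[OF fu(3,4), of i] i(1) by (simp add: b_def)
    finally show ?thesis .
  qed
  have "half g J j c = half f I i b"
  proof
    show "half g J j c \<subseteq> half f I i b"
    proof
      fix v assume "v \<in> half g J j c"
      then obtain u where u: "u \<subseteq> J" "j \<in> u \<longleftrightarrow> c" "v = g u" unfolding half_def by blast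
      then show "v \<in> half f I i b" unfolding half_def using s1[OF u(1)] key[OF u(1)]
        by (intro image_eqI[of _ _ "\<sigma> u"]) auto
    qed
    show "half f I i b \<subseteq> half g J j c"
    proof
      fix v assume "v \<in> half f I i b"
      then obtain x where x: "x \<subseteq> I" "i \<in> x \<longleftrightarrow> b" "v = f x" unfolding half_def by blast
      then show "v \<in> half g J j c" unfolding half_def using t1[OF x(1)] key[of "\<tau> x"] st[OF x(1)]
        by (intro image_eqI[of _ _ "\<tau> x"]) auto
    qed
  qed
  then show ?thesis using iI by blast
qed


lemma facet_gcube: "is_facet V E D C \<Longrightarrow> \<exists>I f i b. gcube I f C \<and> i \<in> I \<and> D = half f I i b"
  unfolding is_facet_def cube_param_gcube half_def by blast

lemma facet_in: "gcube I f C \<Longrightarrow> is_facet V E D C \<Longrightarrow> \<exists>i\<in>I. \<exists>b. D = half f I i b"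
  using facet_gcube PI by metis

lemma facet_card: "is_facet V E D C \<Longrightarrow> card C = 2 * card D \<and> D \<subseteq> C \<and> finite C \<and> card D > 0 \<and> C \<subseteq> V"
proof -
  assume "is_facet V E D C"
  then obtain I f i b where g: "gcube I f C" "i \<in> I" "D = half f I i b" using facet_gcube by blast
  have "card I > 0" using g gcube_fin card_gt_0_iff by blast
  then obtain m where m: "card I = Suc m" using gr0_implies_Suc by blast
  have c1: "card C = 2 ^ Suc m" using gcube_card[OF g(1)] m by simp
  have c2: "card D = 2 ^ m" using half_card[OF g(1,2), of b] g(3) m by simp
  have "card C = 2 * card D" using c1 c2 by simp
  moreover have "D \<subseteq> C" using g(3) half_sub[OF g(1)] by blast
  moreover have "finite C" "C \<subseteq> V" using gcube_card[OF g(1)] gcube_V[OF g(1)] by auto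
  moreover have "card D > 0" using c2 by simp
  ultimately show ?thesis by blast
qed

lemma gcube_facet: assumes g: "gcube I f C" and i: "i \<in> I" shows "is_facet V E (half f I i b) C"
proof -
  have fin: "finite I" using g gcube_fin by blast
  obtain h where h: "bij_betw h {0..<card I} I" using ex_bij_betw_nat_finite[OF fin] by blast
  define n where "n = card I"
  have h': "bij_betw h {..<n} I" using h by (simp add: n_def atLeast0LessThan)
  have injh: "inj_on h {..<n}" using h' bij_betw_def by blast
  define f' where "f' x = f (h ` x)" for x
  have bP: "bij_betw (image h) (Pow {..<n}) (Pow I)" using bij_betw_Pow[OF h'] .
  have sdh: "sd (h ` x) (h ` y) = h ` (sd x y)" if "x \<subseteq> {..<n}" "y \<subseteq> {..<n}" for x y
    using injh that by (auto simp: inj_on_def)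
  have gc: "gcube {..<n} f' C" unfolding gcube_def
  proof (intro conjI allI impI)
    show "finite {..<n}" by simp
    show "C \<subseteq> V" using g gcube_V by blast
    show "bij_betw f' (Pow {..<n}) C" unfolding f'_def
      using bij_betw_trans[OF bP, of f C] g unfolding gcube_def comp_def by blast
  next
    fix x y assume xy: "x \<subseteq> {..<n}" "y \<subseteq> {..<n}"
    have "card (sd (h ` x) (h ` y)) = card (sd x y)" unfolding sdh[OF xy]
      using xy by (intro card_image inj_on_subset[OF injh]) blast
    moreover have "h ` {..<n} = I" using h' unfolding bij_betw_def by blast
    then have "h ` x \<subseteq> I" "h ` y \<subseteq> I" using xy by auto
    ultimately show "E (f' x) (f' y) \<longleftrightarrow> card (sd x y) = 1" unfolding f'_def using gcube_E[OF g] by simp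
  qed
  define i' where "i' = inv_into {..<n} h i"
  have i': "i' < n" "h i' = i" using i h' unfolding i'_def bij_betw_def
    by (auto intro: inv_into_into f_inv_into_f)
  have "half f I i b = half f' {..<n} i' b"
  proof
    show "half f I i b \<subseteq> half f' {..<n} i' b"
    proof
      fix v assume "v \<in> half f I i b"
      then obtain y where y: "y \<subseteq> I" "i \<in> y \<longleftrightarrow> b" "v = f y" unfolding half_def by blast
      then have "y \<in> image h ` Pow {..<n}" using bP unfolding bij_betw_def by blast
      then obtain x where x: "x \<subseteq> {..<n}" "y = h ` x" by blast
      have "i \<in> h ` x \<longleftrightarrow> i' \<in> x" using injh x i' by (auto simp: inj_on_def)
      then show "v \<in> half f' {..<n} i' b" unfolding half_def f'_def using x y by blast
    qed
    show "half f' {..<n} i' b \<subseteq> half f I i b"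
    proof
      fix v assume "v \<in> half f' {..<n} i' b"
      then obtain x where x: "x \<subseteq> {..<n}" "i' \<in> x \<longleftrightarrow> b" "v = f (h ` x)" unfolding half_def f'_def by blast
      have "i \<in> h ` x \<longleftrightarrow> i' \<in> x" using injh x i' by (auto simp: inj_on_def)
      moreover have "h ` {..<n} = I" using h' unfolding bij_betw_def by blast
      then have "h ` x \<subseteq> I" using x by auto
      ultimately show "v \<in> half f I i b" unfolding half_def using x by blast
    qed
  qed
  then show ?thesis unfolding is_facet_def cube_param_gcube half_def using gc i' by blast
qed

lemma subcube:
  assumes g: "gcube I f C" and J: "J \<subseteq> I" and s: "s \<subseteq> I - J"
  shows "gcube J (\<lambda>y. f (y \<union> s)) (f ` ((\<lambda>y. y \<union> s) ` Pow J))"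
  unfolding gcube_def
proof (intro conjI allI impI)
  show "finite J" using g gcube_fin J finite_subset by blast
  have CV: "C \<subseteq> V" "C = f ` Pow I" using gcube_V[OF g] gcube_img[OF g] by auto
  have "(\<lambda>y. y \<union> s) ` Pow J \<subseteq> Pow I" using J s by auto
  then show "f ` (\<lambda>y. y \<union> s) ` Pow J \<subseteq> V" using CV by blast
  have inj: "inj_on (\<lambda>y. y \<union> s) (Pow J)" using s by (auto simp: inj_on_def)
  have "inj_on f ((\<lambda>y. y \<union> s) ` Pow J)" using g J s unfolding gcube_def bij_betw_def
    by (rule_tac inj_on_subset) auto
  then show "bij_betw (\<lambda>y. f (y \<union> s)) (Pow J) (f ` (\<lambda>y. y \<union> s) ` Pow J)"
    using inj unfolding bij_betw_def by (auto simp: inj_on_def)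
next
  fix x y assume xy: "x \<subseteq> J" "y \<subseteq> J"
  have "sd (x \<union> s) (y \<union> s) = sd x y" using xy s by blast
  moreover have "x \<union> s \<subseteq> I" "y \<union> s \<subseteq> I" using xy J s by auto
  ultimately show "E (f (x \<union> s)) (f (y \<union> s)) \<longleftrightarrow> card (sd x y) = 1" using gcube_E[OF g] by simp
qed

lemma Pow01: "Pow {0::nat} = {{}, {0}}" by (auto simp: Pow_def)

lemma edge_gcube:
  assumes e: "E u v"
  shows "gcube {0} (\<lambda>x. if x = {} then u else v) {u, v}"
proof -
  have uv: "u \<noteq> v" "u \<in> V" "v \<in> V" "E v u" using e E_irr E_V E_sym by auto
  show ?thesis unfolding gcube_def Pow01
  proof (intro conjI allI impI)
    show "bij_betw (\<lambda>x. if x = {} then u else v) {{}, {0}} {u, v}"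
      using uv by (auto simp: bij_betw_def inj_on_def)
  next
    fix x y :: "nat set" assume "x \<subseteq> {0}" "y \<subseteq> {0}"
    then have "x = {} \<or> x = {0}" "y = {} \<or> y = {0}" by (auto dest: subset_singletonD)
    then show "E (if x = {} then u else v) (if y = {} then u else v) \<longleftrightarrow> card (sd x y) = 1"
      using uv e E_irr by auto
  qed (use uv in auto)
qed

lemma edge_facet: "E u v \<Longrightarrow> is_facet V E {u} {u, v}"
proof -
  assume e: "E u v"
  have "half (\<lambda>x. if x = {} then u else v) {0} 0 False = {u}"
    unfolding half_def by (auto simp: Pow01[unfolded Pow_def])
  then show ?thesis using gcube_facet[OF edge_gcube[OF e], of 0 False] by simp
qed


lemma gd_le: "walk E ps \<Longrightarrow> hd ps = u \<Longrightarrow> last ps = v \<Longrightarrow> length ps = Suc n \<Longrightarrow> gdist E u v \<le> n"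
  unfolding gdist_def by (rule Least_le) blast

lemma gd_ex: "walk E ps \<Longrightarrow> hd ps = u \<Longrightarrow> last ps = v \<Longrightarrow>
   \<exists>qs. walk E qs \<and> hd qs = u \<and> last qs = v \<and> length qs = Suc (gdist E u v)"
proof -
  assume w: "walk E ps" "hd ps = u" "last ps = v"
  then have "length ps = Suc (length ps - 1)" by (cases ps) (auto simp: walk_def)
  then have "\<exists>n ps. walk E ps \<and> hd ps = u \<and> last ps = v \<and> length ps = Suc n" using w by blast
  then show ?thesis unfolding gdist_def by (rule LeastI_ex)
qed

lemma conn: "u \<in> V \<Longrightarrow> v \<in> V \<Longrightarrow> \<exists>ps. walk E ps \<and> hd ps = u \<and> last ps = v"
  using med unfolding median_graph_def by blast

lemma gd0: "u \<in> V \<Longrightarrow> v \<in> V \<Longrightarrow> gdist E u v = 0 \<Longrightarrow> u = v"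
proof -
  assume uv: "u \<in> V" "v \<in> V" "gdist E u v = 0"
  then obtain qs where "walk E qs" "hd qs = u" "last qs = v" "length qs = 1" using conn gd_ex by fastforce
  then show "u = v" by (cases qs) auto
qed

lemma gd1: "u \<in> V \<Longrightarrow> v \<in> V \<Longrightarrow> gdist E u v = 1 \<Longrightarrow> E u v"
proof -
  assume uv: "u \<in> V" "v \<in> V" "gdist E u v = 1"
  then obtain qs where q: "walk E qs" "hd qs = u" "last qs = v" "length qs = 2" using conn gd_ex by fastforce
  then obtain a b where "qs = [a, b]" by (cases qs; cases "tl qs") auto
  then show "E u v" using q unfolding walk_def by auto
qed

lemma walk2: "E u v \<Longrightarrow> walk E [u, v]" unfolding walk_def by auto
lemma walk3: "E u w \<Longrightarrow> E w v \<Longrightarrow> walk E [u, w, v]" unfolding walk_def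
  by (auto simp: less_Suc_eq nth_Cons split: nat.splits)

lemma gd_edge: "E u v \<Longrightarrow> gdist E u v = 1"
proof -
  assume e: "E u v"
  have "gdist E u v \<le> 1" using gd_le[OF walk2[OF e]] by simp
  moreover have "gdist E u v \<noteq> 0" using gd0 E_V[OF e] E_irr[OF e] by blast
  ultimately show ?thesis by simp
qed

lemma gd_two: "u \<noteq> v \<Longrightarrow> \<not> E u v \<Longrightarrow> E u w \<Longrightarrow> E w v \<Longrightarrow> gdist E u v = 2"
proof -
  assume a: "u \<noteq> v" "\<not> E u v" "E u w" "E w v"
  have "gdist E u v \<le> 2" using gd_le[OF walk3[OF a(3,4)]] by simp
  moreover have "u \<in> V" "v \<in> V" using a E_V by auto
  then have "gdist E u v \<noteq> 0" "gdist E u v \<noteq> 1" using gd0 gd1 a by blast+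
  ultimately show ?thesis by simp
qed

lemma no_tri: "E a b \<Longrightarrow> E b c \<Longrightarrow> E c a \<Longrightarrow> False"
proof -
  assume e: "E a b" "E b c" "E c a"
  have V: "a \<in> V" "b \<in> V" "c \<in> V" using e E_V by auto
  obtain m where m: "m \<in> V" "gdist E a m + gdist E m b = gdist E a b"
    "gdist E b m + gdist E m c = gdist E b c" "gdist E a m + gdist E m c = gdist E a c"
    using med V unfolding median_graph_def by blast
  have d: "gdist E a b = 1" "gdist E b c = 1" "gdist E a c = 1" "gdist E b a = 1"
    using gd_edge e E_sym by auto
  show False
  proof (cases "gdist E a m = 0")
    case True
    then have "m = a" using gd0 V m by blast
    then show False using m d by (simp add: gd_edge[OF E_sym[OF e(3)]] gd_edge[OF E_sym[OF e(1)]])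
  next
    case False
    then have "gdist E m b = 0" "gdist E m c = 0" using m d by auto
    then have "m = b" "m = c" using gd0 V m by auto
    then show False using E_irr e by blast
  qed
qed

lemma K23:
  assumes pq: "p \<noteq> q" "\<not> E p q"
    and w: "w1 \<noteq> w2" "w1 \<noteq> w3" "w2 \<noteq> w3"
    and e: "E w1 p" "E w2 p" "E w3 p" "E w1 q" "E w2 q" "E w3 q"
  shows False
proof -
  have V: "w1 \<in> V" "w2 \<in> V" "w3 \<in> V" "p \<in> V" "q \<in> V" using e E_V by auto
  have na: "\<not> E w1 w2" "\<not> E w1 w3" "\<not> E w2 w3"
    using no_tri e E_sym by metis+
  have d2: "gdist E w1 w2 = 2" "gdist E w2 w3 = 2" "gdist E w1 w3 = 2"
    using gd_two w na e E_sym by metis+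
  have med1: "gdist E w1 x + gdist E x w2 = gdist E w1 w2 \<and> gdist E w2 x + gdist E x w3 = gdist E w2 w3 \<and>
      gdist E w1 x + gdist E x w3 = gdist E w1 w3" if "x = p \<or> x = q" for x
    using that d2 gd_edge e E_sym by auto
  have "\<exists>!m. m \<in> V \<and> gdist E w1 m + gdist E m w2 = gdist E w1 w2 \<and>
        gdist E w2 m + gdist E m w3 = gdist E w2 w3 \<and> gdist E w1 m + gdist E m w3 = gdist E w1 w3"
    using med V unfolding median_graph_def by blast
  then show False using med1[of p] med1[of q] V pq by blast
qed


abbreviation "sqX \<equiv> {(x, y). square_opp E x y}"
abbreviation "sqB \<equiv> {(x, y). square_opp (subdiv_adj V E) x y}"

definition crossing :: "'v set \<Rightarrow> 'v set \<Rightarrow> 'v \<Rightarrow> 'v \<Rightarrow> bool" where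
  "crossing D C p q \<longleftrightarrow> p \<in> D \<and> q \<in> C \<and> q \<notin> D \<and> E p q"

lemma F1_step:
  assumes g: "gcube I f C" and i: "i \<in> I" and j: "j \<in> I" "j \<noteq> i" and x: "x \<subseteq> I"
  shows "({f x, f (flip x i)}, {f (flip x j), f (flip (flip x j) i)}) \<in> sqX"
proof -
  have sub: "flip x i \<subseteq> I" "flip (flip x i) j \<subseteq> I" "flip x j \<subseteq> I"
    using x i j by (meson flip_sub)+
  have E1: "E (f x) (f (flip x i))" using gcube_E[OF g x sub(1)] sd_flip by simp
  have E2: "E (f (flip x i)) (f (flip (flip x i) j))" using gcube_E[OF g sub(1) sub(2)] sd_flip by simp
  have E3: "E (f (flip (flip x i) j)) (f (flip x j))"
    using gcube_E[OF g sub(2) sub(3)] sd_flip[of "flip x j" i] flip_comm[of x i j] sd_comm by simp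
  have E4: "E (f (flip x j)) (f x)" using gcube_E[OF g sub(3) x] sd_flip[of x j] sd_comm by simp
  have dist: "distinct [x, flip x i, flip (flip x i) j, flip x j]"
    using j flip_neq flip_neq2 flip_flip_neq flip_comm by (simp, metis flip_flip)
  have "distinct [f x, f (flip x i), f (flip (flip x i) j), f (flip x j)]"
    using dist by (simp add: gcube_inj[OF g] x sub)
  then show ?thesis unfolding square_opp_def using E1 E2 E3 E4 flip_comm[of x i j]
    by (intro CollectI case_prodI exI[of _ "f x"] exI[of _ "f (flip x i)"] exI[of _ "f (flip (flip x i) j)"]
        exI[of _ "f (flip x j)"]) (auto simp: insert_commute)
qed

lemma F1_gen:
  assumes g: "gcube I f C" and i: "i \<in> I"
  shows "x \<subseteq> I \<Longrightarrow> y \<subseteq> I \<Longrightarrow> ({f x, f (flip x i)}, {f y, f (flip y i)}) \<in> sqX\<^sup>*"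
proof (induction "card (sd x y)" arbitrary: x)
  case 0
  have "finite I" using g gcube_fin by blast
  then have "finite (sd x y)" using 0 by (meson finite_Diff finite_UnI finite_subset)
  then have "x = y" using 0 by auto
  then show ?case by simp
next
  case (Suc m)
  have "finite I" using g gcube_fin by blast
  then have fsd: "finite (sd x y)" using Suc.prems by (meson finite_Diff finite_UnI finite_subset)
  then obtain t where t: "t \<in> sd x y" using Suc(2) by (metis card.empty ex_in_conv nat.distinct(1))
  define z where "z = flip x t"
  have tI: "t \<in> I" using t Suc.prems by blast
  have zA: "z \<subseteq> I" using t Suc.prems tI unfolding z_def by (intro flip_sub) auto
  have "sd y z = sd y x - {t}" using t unfolding z_def by (simp add: sd_flip2 sd_comm)
  then have "sd z y = sd x y - {t}" by (simp add: sd_comm)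
  then have "card (sd z y) = m" using Suc(2) t fsd by simp
  then have IH: "({f z, f (flip z i)}, {f y, f (flip y i)}) \<in> sqX\<^sup>*" using Suc zA by blast
  show ?case
  proof (cases "t = i")
    case True
    then have "{f x, f (flip x i)} = {f z, f (flip z i)}" unfolding z_def by auto
    then show ?thesis using IH by simp
  next
    case False
    have "({f x, f (flip x i)}, {f z, f (flip z i)}) \<in> sqX"
      unfolding z_def by (rule F1_step[OF g i tI False Suc.prems(1)])
    then show ?thesis using IH by (rule converse_rtrancl_into_rtrancl)
  qed
qed

lemma cross_char:
  assumes g: "gcube I f C" and i: "i \<in> I" and c: "crossing (half f I i b) C p q"
  shows "\<exists>x. x \<subseteq> I \<and> (i \<in> x \<longleftrightarrow> b) \<and> p = f x \<and> q = f (flip x i)"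
proof -
  obtain x where x: "x \<subseteq> I" "i \<in> x \<longleftrightarrow> b" "p = f x" using c unfolding crossing_def half_def by blast
  obtain z where z: "z \<subseteq> I" "q = f z" using c gcube_img[OF g] unfolding crossing_def by blast
  have "card (sd x z) = 1" using c x z gcube_E[OF g x(1) z(1)] unfolding crossing_def by simp
  then obtain t where t: "z = flip x t" using sd_one by blast
  have "\<not> (i \<in> z \<longleftrightarrow> b)" using c z unfolding crossing_def half_def by blast
  then have "t = i" using t x(2) by (auto simp: flip_def split: if_splits)
  then show ?thesis using x z t by blast
qed

lemma F1:
  assumes D: "is_facet V E D C" and c1: "crossing D C p q" and c2: "crossing D C p' q'"
  shows "({p, q}, {p', q'}) \<in> sqX\<^sup>*"
proof -
  obtain I f i b where g: "gcube I f C" "i \<in> I" "D = half f I i b" using facet_gcube[OF D] by blast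
  obtain x where x: "x \<subseteq> I" "p = f x" "q = f (flip x i)" using cross_char[OF g(1,2)] c1 g(3) by blast
  obtain y where y: "y \<subseteq> I" "p' = f y" "q' = f (flip y i)" using cross_char[OF g(1,2)] c2 g(3) by blast
  show ?thesis using F1_gen[OF g(1,2) x(1) y(1)] x y by simp
qed

lemma cross_ex: assumes D: "is_facet V E D C" shows "\<exists>p q. crossing D C p q"
proof -
  obtain I f i b where g: "gcube I f C" "i \<in> I" "D = half f I i b" using facet_gcube[OF D] by blast
  define x where "x = (if b then {i} else {})"
  have x: "x \<subseteq> I" "i \<in> x \<longleftrightarrow> b" using g by (auto simp: x_def)
  have fx: "flip x i \<subseteq> I" using x g by (simp add: flip_sub)
  have "f x \<in> D" using x g unfolding half_def by blast
  moreover have "f (flip x i) \<in> C" using fx gcube_img[OF g(1)] by blast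
  moreover have "f (flip x i) \<notin> D"
  proof
    assume "f (flip x i) \<in> D"
    then obtain y where "y \<subseteq> I" "i \<in> y \<longleftrightarrow> b" "f (flip x i) = f y" using g unfolding half_def by blast
    then show False using gcube_inj[OF g(1) fx] x by (auto simp: flip_def split: if_splits)
  qed
  moreover have "E (f x) (f (flip x i))" using gcube_E[OF g(1) x(1) fx] sd_flip by simp
  ultimately show ?thesis unfolding crossing_def by blast
qed

lemma half_disj:
  assumes g: "gcube I f C" and bc: "b \<noteq> c"
  shows "half f I i b \<inter> half f I i c = {}"
proof -
  { fix v assume "v \<in> half f I i b" "v \<in> half f I i c"
    then obtain x y where "x \<subseteq> I" "i \<in> x \<longleftrightarrow> b" "v = f x" "y \<subseteq> I" "i \<in> y \<longleftrightarrow> c" "v = f y"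
      unfolding half_def by blast
    then have False using gcube_inj[OF g] bc by metis }
  then show ?thesis by blast
qed

lemma chain:
  assumes BM: "is_facet V E B M" and MT: "is_facet V E M T" and BM': "is_facet V E B M'"
    and M'T: "is_facet V E M' T" and ne: "M \<noteq> M'" and c: "crossing B M p q"
  shows "crossing M' T p q"
proof -
  obtain I f i b where g: "gcube I f T" "i \<in> I" "M = half f I i b" using facet_gcube[OF MT] by blast
  obtain i' b' where i': "i' \<in> I" "M' = half f I i' b'" using facet_in[OF g(1) M'T] by blast
  have cB: "card M = 2 * card B" "B \<subseteq> M" "card B > 0" using facet_card[OF BM] by auto
  have cM: "card T = 2 * card M" "M \<subseteq> T" "finite T" using facet_card[OF MT] by auto
  have BM'': "B \<subseteq> M'" using facet_card[OF BM'] by auto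
  have Bne: "B \<noteq> {}" using cB by auto
  have ii: "i \<noteq> i'"
  proof
    assume "i = i'"
    have "b \<noteq> b'" using ne unfolding g(3) i'(2) \<open>i = i'\<close> by blast
    then have "M \<inter> M' = {}" using half_disj[OF g(1)] g i' \<open>i = i'\<close> by simp
    then show False using cB BM'' Bne by blast
  qed
  have cT: "card T = 2 ^ card I" using gcube_card[OF g(1)] by simp
  have "card I \<ge> 2"
  proof -
    have "{i, i'} \<subseteq> I" using g i' by auto
    then have "card {i, i'} \<le> card I" using card_mono gcube_fin[OF g(1)] by blast
    then show ?thesis using ii by simp
  qed
  then obtain n where n: "card I = Suc (Suc n)" by (metis add_2_eq_Suc le_Suc_ex)
  have cMM: "card (M \<inter> M') = 2 ^ n" using half_inter_card[OF g(1,2) i'(1) ii] g i' n by simp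
  have "card B = 2 ^ n" using cB cM cT n by simp
  moreover have "B \<subseteq> M \<inter> M'" using cB BM'' by blast
  moreover have "finite (M \<inter> M')" using cM by (meson finite_Int finite_subset)
  ultimately have BMM: "B = M \<inter> M'" using cMM by (metis card_subset_eq)
  show ?thesis using c BMM cM BM'' unfolding crossing_def by blast
qed

lemma two_tops:
  assumes a: "is_facet V E B1 T1" "is_facet V E B2 T1" "is_facet V E B1 T2" "is_facet V E B2 T2"
    and ne: "B1 \<noteq> B2"
  shows "T1 = T2"
proof -
  have c: "card T1 = 2 * card B1" "card T1 = 2 * card B2" "card T2 = 2 * card B1"
    "B1 \<subseteq> T1" "B2 \<subseteq> T1" "B1 \<subseteq> T2" "B2 \<subseteq> T2" "finite T1" "finite T2"
    using facet_card[OF a(1)] facet_card[OF a(2)] facet_card[OF a(3)] facet_card[OF a(4)] by auto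
  have "T1 \<subseteq> T2"
  proof (cases "B1 \<inter> B2 = {}")
    case True
    have "finite B1" "finite B2" using c finite_subset by metis+
    then have "card (B1 \<union> B2) = card B1 + card B2" using True card_Un_disjoint by blast
    then have "card (B1 \<union> B2) = card T1" using c by simp
    then have "B1 \<union> B2 = T1" using c by (metis Un_subset_iff card_subset_eq)
    then show ?thesis using c by blast
  next
    case False
    obtain I f i b where g: "gcube I f T1" "i \<in> I" "B1 = half f I i b" using facet_gcube[OF a(1)] by blast
    obtain j c' where j: "j \<in> I" "B2 = half f I j c'" using facet_in[OF g(1) a(2)] by blast
    have ij: "i \<noteq> j"
    proof
      assume "i = j"
      have "b \<noteq> c'" using ne unfolding g(3) j(2) \<open>i = j\<close> by blast
      then show False using half_disj[OF g(1)] g j False \<open>i = j\<close> by simp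
    qed
    obtain J h where h: "gcube J h T2" using facet_gcube[OF a(3)] by blast
    show ?thesis
    proof
      fix w assume "w \<in> T1"
      then obtain x where x: "x \<subseteq> I" "w = f x" using gcube_img[OF g(1)] by blast
      show "w \<in> T2"
      proof (cases "(i \<in> x \<longleftrightarrow> b) \<or> (j \<in> x \<longleftrightarrow> c')")
        case True
        then have "w \<in> B1 \<or> w \<in> B2" using x g j unfolding half_def by blast
        then show ?thesis using c by blast
      next
        case nb: False
        define p where "p = f (flip x i)"
        define q where "q = f (flip x j)"
        define r where "r = f (flip (flip x i) j)"
        have sub: "flip x i \<subseteq> I" "flip x j \<subseteq> I" "flip (flip x i) j \<subseteq> I"
          using x g j by (meson flip_sub)+
        have pB: "p \<in> B1" using nb sub g unfolding p_def half_def by (auto simp: flip_mem)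
        have qB: "q \<in> B2" using nb sub j unfolding q_def half_def by (auto simp: flip_mem)
        have rB: "r \<in> B1" using nb sub g ij unfolding r_def half_def by (auto simp: flip_mem)
        have wB: "w \<notin> B1"
        proof
          assume "w \<in> B1"
          then obtain y where "y \<subseteq> I" "i \<in> y \<longleftrightarrow> b" "w = f y" using g unfolding half_def by blast
          then show False using gcube_inj[OF g(1)] x nb by metis
        qed
        have wr: "w \<noteq> r" using wB rB by blast
        have Ewp: "E w p" using gcube_E[OF g(1) x(1) sub(1)] x sd_flip unfolding p_def by simp
        have Ewq: "E w q" using gcube_E[OF g(1) x(1) sub(2)] x sd_flip unfolding q_def by simp
        have Erp: "E r p" using gcube_E[OF g(1) sub(3) sub(1)] sd_flip[of "flip x i" j] sd_comm
          unfolding r_def p_def by simp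
        have Erq: "E r q" using gcube_E[OF g(1) sub(3) sub(2)] sd_flip[of "flip x j" i] sd_comm flip_comm[of x i j]
          unfolding r_def q_def by simp
        have pq: "p \<noteq> q" using gcube_inj[OF g(1) sub(1) sub(2)] flip_neq2[OF ij] unfolding p_def q_def by simp
        have nEpq: "\<not> E p q" using gcube_E[OF g(1) sub(1) sub(2)] sd_flip_flip[OF ij] ij unfolding p_def q_def by simp
        have pT: "p \<in> T2" "q \<in> T2" "r \<in> T2" using pB qB rB c ij g j by blast+
        obtain y z u where yzu: "y \<subseteq> J" "p = h y" "z \<subseteq> J" "q = h z" "u \<subseteq> J" "r = h u"
          using pT gcube_img[OF h] by blast
        obtain a where ya: "y = flip u a" "a \<in> sd u y" using sd_one gcube_E[OF h yzu(5,1)] Erp yzu by metis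
        obtain a' where za: "z = flip u a'" "a' \<in> sd u z" using sd_one gcube_E[OF h yzu(5,3)] Erq yzu by metis
        have aJ: "a \<in> J" "a' \<in> J" using ya za yzu by blast+
        have aa: "a \<noteq> a'" using pq ya za yzu by auto
        define w2 where "w2 = h (flip (flip u a) a')"
        have sub2: "flip (flip u a) a' \<subseteq> J" "flip u a \<subseteq> J" "flip u a' \<subseteq> J"
          using yzu aJ by (meson flip_sub)+
        have w2T: "w2 \<in> T2" using sub2 gcube_img[OF h] unfolding w2_def by blast
        have Ew2p: "E w2 p" using gcube_E[OF h sub2(1) sub2(2)] sd_flip[of "flip u a" a'] sd_comm yzu ya
          unfolding w2_def by simp
        have Ew2q: "E w2 q" using gcube_E[OF h sub2(1) sub2(3)] sd_flip[of "flip u a'" a] sd_comm yzu za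
            flip_comm[of u a a'] unfolding w2_def by simp
        have w2r: "w2 \<noteq> r" using gcube_inj[OF h sub2(1) yzu(5)] flip_flip_neq[OF aa] yzu unfolding w2_def by simp
        show ?thesis
        proof (rule ccontr)
          assume "w \<notin> T2"
          then have "w \<noteq> w2" using w2T by blast
          then show False using K23[OF pq nEpq \<open>w \<noteq> w2\<close> wr w2r Ewp Ew2p _ Ewq Ew2q] Erp Erq by blast
        qed
      qed
    qed
  qed
  then show ?thesis using c by (metis card_subset_eq)
qed


lemma fc: "is_facet V E P Q \<Longrightarrow> card Q = 2 * card P" using facet_card by blast
lemma fcp: "is_facet V E P Q \<Longrightarrow> card P > 0" using facet_card by blast

definition Pinv :: "'v set set \<Rightarrow> 'v set set \<Rightarrow> bool" where
  "Pinv h x \<longleftrightarrow> (\<exists>C D p q. x = {C, D} \<and> is_facet V E D C \<and> crossing D C p q \<and> {p, q} \<in> h)"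

definition hclosed :: "'v set set \<Rightarrow> bool" where
  "hclosed h \<longleftrightarrow> (\<forall>e e'. e \<in> h \<longrightarrow> (e, e') \<in> sqX\<^sup>* \<longrightarrow> e' \<in> h)"

lemma facet_pair: "is_facet V E D C \<Longrightarrow> is_facet V E D' C' \<Longrightarrow> {C, D} = {C', D'} \<Longrightarrow> C = C' \<and> D = D'"
proof -
  assume a: "is_facet V E D C" "is_facet V E D' C'" "{C, D} = {C', D'}"
  have "\<not> (C = D' \<and> D = C')"
  proof
    assume "C = D' \<and> D = C'"
    then show False using fc[OF a(1)] fc[OF a(2)] fcp[OF a(1)] by simp
  qed
  then show ?thesis using a(3) unfolding doubleton_eq_iff by blast
qed

lemma Pinv_chain:
  assumes BM: "is_facet V E B M" and MT: "is_facet V E M T" and BM': "is_facet V E B M'"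
    and M'T: "is_facet V E M' T" and ne: "M \<noteq> M'" and hcl: "hclosed h"
    and P: "Pinv h {M, B}"
  shows "Pinv h {T, M'}"
proof -
  from P[unfolded Pinv_def] obtain C D p q where
    cd0: "{M, B} = {C, D} \<and> is_facet V E D C \<and> crossing D C p q \<and> {p, q} \<in> h"
    by (elim exE) (rule that)
  then have cd: "{M, B} = {C, D}" "is_facet V E D C" "crossing D C p q" "{p, q} \<in> h" by blast+
  have "C = M \<and> D = B" by (rule facet_pair[OF cd(2) BM cd(1)[symmetric]])
  then have "crossing M' T p q" using chain[OF BM MT BM' M'T ne] cd by simp
  then show ?thesis unfolding Pinv_def using M'T cd(4)
    by (intro exI[of _ T] exI[of _ M'] exI[of _ p] exI[of _ q]) simp
qed

lemma Pinv_chain_rev: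
  assumes BM: "is_facet V E B M" and MT: "is_facet V E M T" and BM': "is_facet V E B M'"
    and M'T: "is_facet V E M' T" and ne: "M \<noteq> M'" and hcl: "hclosed h"
    and P: "Pinv h {T, M'}"
  shows "Pinv h {M, B}"
proof -
  from P[unfolded Pinv_def] obtain C D p q where
    cd0: "{T, M'} = {C, D} \<and> is_facet V E D C \<and> crossing D C p q \<and> {p, q} \<in> h"
    by (elim exE) (rule that)
  then have cd: "{T, M'} = {C, D}" "is_facet V E D C" "crossing D C p q" "{p, q} \<in> h" by blast+
  have "C = T \<and> D = M'" by (rule facet_pair[OF cd(2) M'T cd(1)[symmetric]])
  then have c1: "crossing M' T p q" using cd by simp
  obtain p0 q0 where c0: "crossing B M p0 q0" using cross_ex[OF BM] by blast
  then have "crossing M' T p0 q0" using chain[OF BM MT BM' M'T ne] by simp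
  then have "({p, q}, {p0, q0}) \<in> sqX\<^sup>*" using F1[OF M'T c1] by simp
  then have "{p0, q0} \<in> h" using hcl cd(4) unfolding hclosed_def by blast
  then show ?thesis unfolding Pinv_def using BM c0
    by (intro exI[of _ M] exI[of _ B] exI[of _ p0] exI[of _ q0]) simp
qed

lemma Pinv_step:
  assumes sq: "square_opp (subdiv_adj V E) x y" and hcl: "hclosed h" and px: "Pinv h x"
  shows "Pinv h y"
proof -
  obtain a b c d where abcd: "subdiv_adj V E a b" "subdiv_adj V E b c" "subdiv_adj V E c d"
    "subdiv_adj V E d a" and dist: "distinct [a, b, c, d]" and x: "x = {a, b}" and y: "y = {d, c}"
    using sq unfolding square_opp_def by blast
  from abcd show ?thesis unfolding subdiv_adj_def
  proof (elim disjE)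
    assume h: "is_facet V E b a" "is_facet V E c b" "is_facet V E d c" "is_facet V E a d"
    show ?thesis using fc[OF h(1)] fc[OF h(2)] fc[OF h(3)] fc[OF h(4)] fcp[OF h(1)] fcp[OF h(2)] fcp[OF h(3)] fcp[OF h(4)] by linarith
  next
    assume h: "is_facet V E b a" "is_facet V E c b" "is_facet V E d c" "is_facet V E d a"
    show ?thesis using fc[OF h(1)] fc[OF h(2)] fc[OF h(3)] fc[OF h(4)] fcp[OF h(1)] fcp[OF h(2)] fcp[OF h(3)] fcp[OF h(4)] by linarith
  next
    assume h: "is_facet V E b a" "is_facet V E c b" "is_facet V E c d" "is_facet V E a d"
    show ?thesis using fc[OF h(1)] fc[OF h(2)] fc[OF h(3)] fc[OF h(4)] fcp[OF h(1)] fcp[OF h(2)] fcp[OF h(3)] fcp[OF h(4)] by linarith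
  next
    assume h: "is_facet V E b a" "is_facet V E c b" "is_facet V E c d" "is_facet V E d a"
    have "Pinv h {d, c}" by (rule Pinv_chain_rev[of c d a b h]) (use h dist hcl px x in \<open>auto simp: insert_commute\<close>)
    then show ?thesis using y by (simp add: insert_commute)
  next
    assume h: "is_facet V E b a" "is_facet V E b c" "is_facet V E d c" "is_facet V E a d"
    show ?thesis using fc[OF h(1)] fc[OF h(2)] fc[OF h(3)] fc[OF h(4)] fcp[OF h(1)] fcp[OF h(2)] fcp[OF h(3)] fcp[OF h(4)] by linarith
  next
    assume h: "is_facet V E b a" "is_facet V E b c" "is_facet V E d c" "is_facet V E d a"
    show ?thesis using two_tops[of b a d c] h dist by auto
  next
    assume h: "is_facet V E b a" "is_facet V E b c" "is_facet V E c d" "is_facet V E a d"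
    have "Pinv h {d, c}" by (rule Pinv_chain[of b a d c h]) (use h dist hcl px x in \<open>auto simp: insert_commute\<close>)
    then show ?thesis using y by (simp add: insert_commute)
  next
    assume h: "is_facet V E b a" "is_facet V E b c" "is_facet V E c d" "is_facet V E d a"
    show ?thesis using fc[OF h(1)] fc[OF h(2)] fc[OF h(3)] fc[OF h(4)] fcp[OF h(1)] fcp[OF h(2)] fcp[OF h(3)] fcp[OF h(4)] by linarith
  next
    assume h: "is_facet V E a b" "is_facet V E c b" "is_facet V E d c" "is_facet V E a d"
    show ?thesis using fc[OF h(1)] fc[OF h(2)] fc[OF h(3)] fc[OF h(4)] fcp[OF h(1)] fcp[OF h(2)] fcp[OF h(3)] fcp[OF h(4)] by linarith
  next
    assume h: "is_facet V E a b" "is_facet V E c b" "is_facet V E d c" "is_facet V E d a"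
    have "Pinv h {c, d}" by (rule Pinv_chain_rev[of d c b a h]) (use h dist hcl px x in \<open>auto simp: insert_commute\<close>)
    then show ?thesis using y by (simp add: insert_commute)
  next
    assume h: "is_facet V E a b" "is_facet V E c b" "is_facet V E c d" "is_facet V E a d"
    show ?thesis using two_tops[of a b c d] h dist by auto
  next
    assume h: "is_facet V E a b" "is_facet V E c b" "is_facet V E c d" "is_facet V E d a"
    show ?thesis using fc[OF h(1)] fc[OF h(2)] fc[OF h(3)] fc[OF h(4)] fcp[OF h(1)] fcp[OF h(2)] fcp[OF h(3)] fcp[OF h(4)] by linarith
  next
    assume h: "is_facet V E a b" "is_facet V E b c" "is_facet V E d c" "is_facet V E a d"
    have "Pinv h {c, d}" by (rule Pinv_chain[of a b c d h]) (use h dist hcl px x in \<open>auto simp: insert_commute\<close>)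
    then show ?thesis using y by (simp add: insert_commute)
  next
    assume h: "is_facet V E a b" "is_facet V E b c" "is_facet V E d c" "is_facet V E d a"
    show ?thesis using fc[OF h(1)] fc[OF h(2)] fc[OF h(3)] fc[OF h(4)] fcp[OF h(1)] fcp[OF h(2)] fcp[OF h(3)] fcp[OF h(4)] by linarith
  next
    assume h: "is_facet V E a b" "is_facet V E b c" "is_facet V E c d" "is_facet V E a d"
    show ?thesis using fc[OF h(1)] fc[OF h(2)] fc[OF h(3)] fc[OF h(4)] fcp[OF h(1)] fcp[OF h(2)] fcp[OF h(3)] fcp[OF h(4)] by linarith
  next
    assume h: "is_facet V E a b" "is_facet V E b c" "is_facet V E c d" "is_facet V E d a"
    show ?thesis using fc[OF h(1)] fc[OF h(2)] fc[OF h(3)] fc[OF h(4)] fcp[OF h(1)] fcp[OF h(2)] fcp[OF h(3)] fcp[OF h(4)] by linarith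
  qed
qed

lemma Pinv_rtrancl: "(x, y) \<in> sqB\<^sup>* \<Longrightarrow> hclosed h \<Longrightarrow> Pinv h x \<Longrightarrow> Pinv h y"
proof (induction rule: rtrancl_induct)
  case base then show ?case by simp
next
  case (step y z) then show ?case using Pinv_step by blast
qed


lemma Pow2: "x \<subseteq> {0::nat, 1} \<longleftrightarrow> x = {} \<or> x = {0} \<or> x = {1} \<or> x = {0, 1}"
proof
  assume x: "x \<subseteq> {0, 1}"
  have "x = {z. z \<in> x}" by simp
  show "x = {} \<or> x = {0} \<or> x = {1} \<or> x = {0, 1}"
  proof (cases "0 \<in> x"; cases "1 \<in> x")
    assume "0 \<in> x" "1 \<in> x" then have "x = {0, 1}" using x by blast then show ?thesis by simp
  next
    assume "0 \<in> x" "1 \<notin> x" then have "x = {0}" using x by blast then show ?thesis by simp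
  next
    assume "0 \<notin> x" "1 \<in> x" then have "x = {1}" using x by blast then show ?thesis by simp
  next
    assume "0 \<notin> x" "1 \<notin> x" then have "x = {}" using x by blast then show ?thesis by simp
  qed
qed auto

lemma sq_intro: "subdiv_adj V E a b \<Longrightarrow> subdiv_adj V E b c \<Longrightarrow> subdiv_adj V E c d \<Longrightarrow> subdiv_adj V E d a \<Longrightarrow>
  distinct [a, b, c, d] \<Longrightarrow> ({a, b}, {d, c}) \<in> sqB"
  unfolding square_opp_def by (intro CollectI case_prodI exI[of _ a] exI[of _ b] exI[of _ c] exI[of _ d]) simp

lemma sqX_elim: "(e, e') \<in> sqX \<Longrightarrow> \<exists>a b c d. E a b \<and> E b c \<and> E c d \<and> E d a \<and> distinct [a, b, c, d] \<and>
       e = {a, b} \<and> e' = {d, c}"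
  unfolding square_opp_def by blast

lemma lift1:
  assumes e: "E a b" "E b c" "E c d" "E d a" and dist: "distinct [a, b, c, d]"
  shows "({{a, b}, {a}}, {{d, c}, {d}}) \<in> sqB\<^sup>*"
proof -
  define q where "q x = (if x = {} then a else if x = {0::nat} then b else if x = {1} then d else c)" for x
  have nac: "\<not> E a c" "\<not> E c a" "\<not> E b d" "\<not> E d b" using no_tri e E_sym by metis+
  have irr: "\<not> E z z" for z using E_irr by blast
  have V: "{a, b, c, d} \<subseteq> V" using e E_V by auto
  have q: "q {} = a" "q {0} = b" "q {1} = d" "q {0, 1} = c" by (auto simp: q_def)
  have P: "Pow {0::nat, 1} = {{}, {0}, {1}, {0, 1}}" using Pow2 by blast
  have gq: "gcube {0, 1} q {a, b, c, d}" unfolding gcube_def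
  proof (intro conjI allI impI)
    show "bij_betw q (Pow {0, 1}) {a, b, c, d}" unfolding P bij_betw_def inj_on_def
      using dist q by auto
  next
    fix x y :: "nat set" assume "x \<subseteq> {0, 1}" "y \<subseteq> {0, 1}"
    then have "x = {} \<or> x = {0} \<or> x = {1} \<or> x = {0, 1}" "y = {} \<or> y = {0} \<or> y = {1} \<or> y = {0, 1}"
      using Pow2 by blast+
    then show "E (q x) (q y) \<longleftrightarrow> card (sd x y) = 1"
      using q nac irr e E_sym by (elim disjE) (simp_all add: insert_Diff_if)
  qed (use V in auto)
  have h1: "half q {0, 1} 1 False = {a, b}" unfolding half_def
  proof -
    have "{x. x \<subseteq> {0::nat, 1} \<and> (1 \<in> x \<longleftrightarrow> False)} = {{}, {0}}" using Pow2 by auto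
    then show "q ` {x. x \<subseteq> {0, 1} \<and> (1 \<in> x \<longleftrightarrow> False)} = {a, b}" using q by simp
  qed
  have h2: "half q {0, 1} 0 False = {a, d}" unfolding half_def
  proof -
    have "{x. x \<subseteq> {0::nat, 1} \<and> (0 \<in> x \<longleftrightarrow> False)} = {{}, {1}}" using Pow2 by auto
    then show "q ` {x. x \<subseteq> {0, 1} \<and> (0 \<in> x \<longleftrightarrow> False)} = {a, d}" using q by simp
  qed
  have h3: "half q {0, 1} 1 True = {d, c}" unfolding half_def
  proof -
    have "{x. x \<subseteq> {0::nat, 1} \<and> (1 \<in> x \<longleftrightarrow> True)} = {{1}, {0, 1}}" using Pow2 by auto
    then show "q ` {x. x \<subseteq> {0, 1} \<and> (1 \<in> x \<longleftrightarrow> True)} = {d, c}" using q by simp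
  qed
  define Q where "Q = {a, b, c, d}"
  have fab: "is_facet V E {a, b} Q" using gcube_facet[OF gq, of 1 False] h1 Q_def by simp
  have fad: "is_facet V E {a, d} Q" using gcube_facet[OF gq, of 0 False] h2 Q_def by simp
  have fdc: "is_facet V E {d, c} Q" using gcube_facet[OF gq, of 1 True] h3 Q_def by simp
  have fa1: "is_facet V E {a} {a, b}" using edge_facet[OF e(1)] .
  have fa2: "is_facet V E {a} {a, d}" using edge_facet[OF E_sym[OF e(4)]] .
  have fd1: "is_facet V E {d} {a, d}" using edge_facet[OF e(4)] by (simp add: insert_commute)
  have fd2: "is_facet V E {d} {d, c}" using edge_facet[OF E_sym[OF e(3)]] .
  have nm: "\<And>z A B. z \<in> A \<Longrightarrow> z \<notin> B \<Longrightarrow> A \<noteq> B" by blast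
  have ab: "a \<noteq> b" "a \<noteq> c" "a \<noteq> d" "b \<noteq> c" "b \<noteq> d" "c \<noteq> d" using dist by auto
  have d1: "distinct [{a, b}, {a}, {a, d}, Q]"
    using nm[of b "{a, b}" "{a}"] nm[of b "{a, b}" "{a, d}"] nm[of c Q "{a, b}"]
      nm[of d "{a, d}" "{a}"] nm[of b Q "{a}"] nm[of b Q "{a, d}"] ab unfolding Q_def
    by (simp only: distinct.simps list.set insert_iff empty_iff de_Morgan_disj simp_thms) blast
  have d2: "distinct [Q, {a, d}, {d}, {d, c}]"
    using nm[of b Q "{a, d}"] nm[of b Q "{d}"] nm[of b Q "{d, c}"]
      nm[of a "{a, d}" "{d}"] nm[of a "{a, d}" "{d, c}"] nm[of c "{d, c}" "{d}"] ab unfolding Q_def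
    by (simp only: distinct.simps list.set insert_iff empty_iff de_Morgan_disj simp_thms) blast
  have s1: "({{a, b}, {a}}, {Q, {a, d}}) \<in> sqB"
    by (rule sq_intro) (use fab fad fa1 fa2 d1 in \<open>simp_all add: subdiv_adj_def\<close>)
  have s2: "({Q, {a, d}}, {{d, c}, {d}}) \<in> sqB"
    by (rule sq_intro) (use fad fdc fd1 fd2 d2 in \<open>simp_all add: subdiv_adj_def\<close>)
  show ?thesis using s1 s2 by (meson r_into_rtrancl rtrancl_into_rtrancl)
qed

lemma lift_rt: "(e, e') \<in> sqX\<^sup>* \<Longrightarrow> u \<in> e \<Longrightarrow> \<exists>u'\<in>e'. ({e, {u}}, {e', {u'}}) \<in> sqB\<^sup>*"
proof (induction rule: rtrancl_induct)
  case base then show ?case by blast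
next
  case (step y z)
  then obtain u' where u': "u' \<in> y" "({e, {u}}, {y, {u'}}) \<in> sqB\<^sup>*" by blast
  obtain a b c d where sq: "E a b" "E b c" "E c d" "E d a" "distinct [a, b, c, d]" "y = {a, b}" "z = {d, c}"
    using sqX_elim[OF step(2)] by blast
  show ?case
  proof (cases "u' = a")
    case True
    then have "({y, {u'}}, {z, {d}}) \<in> sqB\<^sup>*" using lift1[OF sq(1-5)] sq(6,7) by simp
    then show ?thesis using u' sq(7) by (meson insertI1 rtrancl_trans)
  next
    case False
    then have "u' = b" using u' sq by auto
    have "E b a" "E a d" "E d c" "E c b" "distinct [b, a, d, c]" using sq E_sym by auto
    then have "({{b, a}, {b}}, {{c, d}, {c}}) \<in> sqB\<^sup>*" by (rule lift1)
    then have "({y, {u'}}, {z, {c}}) \<in> sqB\<^sup>*" using \<open>u' = b\<close> sq(6,7) by (simp add: insert_commute)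
    then show ?thesis using u' sq(7) by (meson insertI1 insertI2 rtrancl_trans)
  qed
qed


lemma subcube0: "gcube I f C \<Longrightarrow> T \<subseteq> I \<Longrightarrow> gcube T f (f ` Pow T)"
proof -
  assume g: "gcube I f C" and T: "T \<subseteq> I"
  have "gcube T (\<lambda>y. f (y \<union> {})) (f ` ((\<lambda>y. y \<union> {}) ` Pow T))" using subcube[OF g T, of "{}"] by simp
  then show ?thesis by simp
qed

lemma slice_eq: "i \<in> T \<Longrightarrow> {x. x \<subseteq> T \<and> (i \<in> x \<longleftrightarrow> b)} = (\<lambda>y. y \<union> (if b then {i} else {})) ` Pow (T - {i})"
proof
  assume i: "i \<in> T"
  show "{x. x \<subseteq> T \<and> (i \<in> x \<longleftrightarrow> b)} \<subseteq> (\<lambda>y. y \<union> (if b then {i} else {})) ` Pow (T - {i})"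
  proof
    fix x assume x: "x \<in> {x. x \<subseteq> T \<and> (i \<in> x \<longleftrightarrow> b)}"
    then have "x = (x - {i}) \<union> (if b then {i} else {})" by auto
    moreover have "x - {i} \<in> Pow (T - {i})" using x by auto
    ultimately show "x \<in> (\<lambda>y. y \<union> (if b then {i} else {})) ` Pow (T - {i})" by blast
  qed
  show "(\<lambda>y. y \<union> (if b then {i} else {})) ` Pow (T - {i}) \<subseteq> {x. x \<subseteq> T \<and> (i \<in> x \<longleftrightarrow> b)}"
    using i by auto
qed

lemma base_form_facet:
  assumes D: "is_facet V E D C"
  shows "\<exists>u v. E u v \<and> ({C, D}, {{u, v}, {u}}) \<in> sqB\<^sup>*"
proof -
  obtain I f i b where g: "gcube I f C" "i \<in> I" "D = half f I i b" using facet_gcube[OF D] by blast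
  define s where "s = (if b then {i} else {})"
  define Ct where "Ct T = f ` Pow T" for T
  define Dt where "Dt T = f ` {x. x \<subseteq> T \<and> (i \<in> x \<longleftrightarrow> b)}" for T
  have finI: "finite I" using g gcube_fin by blast
  have main: "K \<subseteq> I - {i} \<longrightarrow> ({Ct (insert i K), Dt (insert i K)}, {Ct {i}, Dt {i}}) \<in> sqB\<^sup>*"
    if K: "finite K" for K
    using K
  proof (induction K rule: finite_induct)
    case empty then show ?case by simp
  next
    case (insert j K)
    show ?case
    proof
      assume sub: "insert j K \<subseteq> I - {i}"
      define T where "T = insert i K"
      define T' where "T' = insert j T"
      have TI: "T \<subseteq> I" "T' \<subseteq> I" "i \<in> T" "i \<in> T'" "j \<in> T'" "j \<notin> T" "j \<in> I" "j \<noteq> i"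
        using sub insert g unfolding T_def T'_def by auto
      have IH: "({Ct T, Dt T}, {Ct {i}, Dt {i}}) \<in> sqB\<^sup>*" using insert sub unfolding T_def by blast
      have gT: "gcube T f (Ct T)" using subcube0[OF g(1) TI(1)] unfolding Ct_def .
      have gT': "gcube T' f (Ct T')" using subcube0[OF g(1) TI(2)] unfolding Ct_def .
      have F1: "is_facet V E (Dt T') (Ct T')" using gcube_facet[OF gT' TI(4), of b] unfolding half_def Dt_def .
      have F2: "is_facet V E (Dt T) (Ct T)" using gcube_facet[OF gT TI(3), of b] unfolding half_def Dt_def .
      have "{x. x \<subseteq> T' \<and> (j \<in> x \<longleftrightarrow> False)} = Pow T" using TI unfolding T'_def by auto
      then have F3: "is_facet V E (Ct T) (Ct T')" using gcube_facet[OF gT' TI(5), of False]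
        unfolding half_def Ct_def by simp
      have s1: "s \<subseteq> I - (T' - {i})" using g(2) unfolding s_def by auto
      have gD: "gcube (T' - {i}) (\<lambda>y. f (y \<union> s)) (f ` ((\<lambda>y. y \<union> s) ` Pow (T' - {i})))"
        using subcube[OF g(1) _ s1] TI by blast
      have eD': "f ` ((\<lambda>y. y \<union> s) ` Pow (T' - {i})) = Dt T'"
        unfolding Dt_def slice_eq[OF TI(4)] s_def ..
      have "{y. y \<subseteq> T' - {i} \<and> (j \<in> y \<longleftrightarrow> False)} = Pow (T - {i})" using TI unfolding T'_def by auto
      then have "half (\<lambda>y. f (y \<union> s)) (T' - {i}) j False = f ` ((\<lambda>y. y \<union> s) ` Pow (T - {i}))"
        unfolding half_def by (simp add: image_image)
      also have "\<dots> = Dt T" unfolding Dt_def slice_eq[OF TI(3)] s_def ..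
      finally have F4: "is_facet V E (Dt T) (Dt T')"
        using gcube_facet[OF gD, of j False] eD' TI by simp
      have c1: "card (Ct T') = 2 * card (Dt T')" "card (Dt T') = 2 * card (Dt T)" "card (Ct T') = 2 * card (Ct T)"
        "card (Ct T) = 2 * card (Dt T)" "card (Dt T) > 0"
        using fc[OF F1] fc[OF F4] fc[OF F3] fc[OF F2] fcp[OF F2] by auto
      have sj: "s \<union> {j} \<subseteq> T'" "i \<in> s \<union> {j} \<longleftrightarrow> b" using TI unfolding s_def by auto
      have "f (s \<union> {j}) \<in> Dt T'" unfolding Dt_def using sj by blast
      moreover have "f (s \<union> {j}) \<notin> Ct T"
      proof
        assume "f (s \<union> {j}) \<in> Ct T"
        then obtain y where "y \<subseteq> T" "f (s \<union> {j}) = f y" unfolding Ct_def by blast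
        then have "s \<union> {j} = y" using gcube_inj[OF g(1)] sj TI by (meson subset_trans)
        then show False using \<open>y \<subseteq> T\<close> TI by blast
      qed
      ultimately have ne: "Dt T' \<noteq> Ct T" by blast
      have nc: "\<And>X Y. card X \<noteq> card Y \<Longrightarrow> X \<noteq> Y" by auto
      have "Ct T' \<noteq> Dt T'" "Ct T' \<noteq> Dt T" "Ct T' \<noteq> Ct T" "Dt T' \<noteq> Dt T" "Dt T \<noteq> Ct T"
        by (rule nc, use c1 in linarith)+
      then have dist: "distinct [Ct T', Dt T', Dt T, Ct T]" using ne by simp
      have "({Ct T', Dt T'}, {Ct T, Dt T}) \<in> sqB"
        using sq_intro[of "Ct T'" "Dt T'" "Dt T" "Ct T"] F1 F2 F3 F4 dist
        unfolding subdiv_adj_def by (simp add: insert_commute)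
      then show "({Ct (insert i (insert j K)), Dt (insert i (insert j K))}, {Ct {i}, Dt {i}}) \<in> sqB\<^sup>*"
        using IH unfolding T'_def T_def by (simp add: insert_commute converse_rtrancl_into_rtrancl)
    qed
  qed
  have II: "insert i (I - {i}) = I" using g by auto
  have "({Ct I, Dt I}, {Ct {i}, Dt {i}}) \<in> sqB\<^sup>*" using main[of "I - {i}"] finI II by simp
  moreover have "Ct I = C" "Dt I = D" using gcube_img[OF g(1)] g(3) unfolding Ct_def Dt_def half_def by auto
  moreover have "Ct {i} = {f s, f (flip s i)}"
  proof -
    have "Pow {i} = {s, flip s i}" unfolding s_def flip_def by auto
    then show ?thesis unfolding Ct_def by simp
  qed
  moreover have "Dt {i} = {f s}"
  proof -
    have "{x. x \<subseteq> {i} \<and> (i \<in> x \<longleftrightarrow> b)} = {s}" unfolding s_def by auto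
    then show ?thesis unfolding Dt_def by simp
  qed
  moreover have "E (f s) (f (flip s i))"
    using gcube_E[OF g(1), of s "flip s i"] sd_flip g(2) flip_sub[of s I i] unfolding s_def by simp
  ultimately show ?thesis by auto
qed

lemma base_form:
  assumes A: "subdiv_adj V E C D"
  shows "\<exists>u v. E u v \<and> ({C, D}, {{u, v}, {u}}) \<in> sqB\<^sup>*"
proof (rule disjE[OF A[unfolded subdiv_adj_def]])
  assume "is_facet V E D C" then show ?thesis by (rule base_form_facet)
next
  assume "is_facet V E C D"
  then have "\<exists>u v. E u v \<and> ({D, C}, {{u, v}, {u}}) \<in> sqB\<^sup>*" by (rule base_form_facet)
  then show ?thesis by (simp add: insert_commute)
qed

end


lemma square_opp_sym: "(\<And>u v. R u v \<Longrightarrow> R v u) \<Longrightarrow> square_opp R x y \<Longrightarrow> square_opp R y x"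
  unfolding square_opp_def
proof -
  assume s: "\<And>u v. R u v \<Longrightarrow> R v u" and "\<exists>a b c d. R a b \<and> R b c \<and> R c d \<and> R d a \<and> distinct [a, b, c, d] \<and> x = {a, b} \<and> y = {d, c}"
  then obtain a b c d where h: "R a b" "R b c" "R c d" "R d a" "distinct [a, b, c, d]" "x = {a, b}" "y = {d, c}"
    by blast
  show "\<exists>a b c d. R a b \<and> R b c \<and> R c d \<and> R d a \<and> distinct [a, b, c, d] \<and> y = {a, b} \<and> x = {d, c}"
  proof -
    have "distinct [d, c, b, a]" using h(5) by auto
    then show ?thesis using s[OF h(3)] s[OF h(2)] s[OF h(1)] s[OF h(4)] h(6,7)
      by (intro exI[of _ d] exI[of _ c] exI[of _ b] exI[of _ a]) simp
  qed
qed

lemma rtrancl_sym_rel: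
  assumes s: "\<And>x y. (x, y) \<in> r \<Longrightarrow> (y, x) \<in> r" and xy: "(x, y) \<in> r\<^sup>*"
  shows "(y, x) \<in> r\<^sup>*"
  using xy
proof (induction rule: rtrancl_induct)
  case base then show ?case by simp
next
  case (step y z)
  have "(z, y) \<in> r" using s step(2) by blast
  then show ?case using step.IH by (rule converse_rtrancl_into_rtrancl)
qed

locale setting = mg V E + wg G S
  for V :: "'v set" and E and G :: "('g, 'b) monoid_scheme" (structure) and S +
  fixes \<phi> :: "'g \<Rightarrow> 'v \<Rightarrow> 'v"
  assumes act: "cubical_action G V E \<phi>"
begin

lemma ga: "group_action G V \<phi>" using act unfolding cubical_action_def by blast
lemma actE: "g \<in> carrier G \<Longrightarrow> E u v \<Longrightarrow> E (\<phi> g u) (\<phi> g v)" using act unfolding cubical_action_def by blast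

lemma comp: "g \<in> carrier G \<Longrightarrow> h \<in> carrier G \<Longrightarrow> v \<in> V \<Longrightarrow> \<phi> (g \<otimes> h) v = \<phi> g (\<phi> h v)"
  using group_action.composition_rule[OF ga] by blast
lemma one: "v \<in> V \<Longrightarrow> \<phi> \<one> v = v"
  using group_action.id_eq_one[OF ga] by (metis restrict_apply')
lemma inv_cancel: "g \<in> carrier G \<Longrightarrow> v \<in> V \<Longrightarrow> \<phi> (inv g) (\<phi> g v) = v"
  using comp[of "inv g" g v] one by simp
lemma inv_cancel2: "g \<in> carrier G \<Longrightarrow> v \<in> V \<Longrightarrow> \<phi> g (\<phi> (inv g) v) = v"
  using comp[of g "inv g" v] one by simp
lemma inV: "g \<in> carrier G \<Longrightarrow> v \<in> V \<Longrightarrow> \<phi> g v \<in> V"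
  using group_action.element_image[OF ga] by blast
lemma injV: "g \<in> carrier G \<Longrightarrow> inj_on (\<phi> g) V"
  using group_action.inj_prop[OF ga] by blast
lemma actE_rev: "g \<in> carrier G \<Longrightarrow> u \<in> V \<Longrightarrow> v \<in> V \<Longrightarrow> E (\<phi> g u) (\<phi> g v) \<Longrightarrow> E u v"
  using actE[of "inv g" "\<phi> g u" "\<phi> g v"] inv_cancel by simp
lemma actE_iff: "g \<in> carrier G \<Longrightarrow> u \<in> V \<Longrightarrow> v \<in> V \<Longrightarrow> E (\<phi> g u) (\<phi> g v) \<longleftrightarrow> E u v"
  using actE actE_rev by blast

lemma img_inj: "g \<in> carrier G \<Longrightarrow> A \<subseteq> V \<Longrightarrow> B \<subseteq> V \<Longrightarrow> \<phi> g ` A = \<phi> g ` B \<longleftrightarrow> A = B"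
  using injV inj_on_image_eq_iff by metis

lemma gcube_act: assumes g: "g \<in> carrier G" and c: "gcube I f C" shows "gcube I (\<phi> g \<circ> f) (\<phi> g ` C)"
  unfolding gcube_def
proof (intro conjI allI impI)
  show "finite I" using c gcube_fin by blast
  have CV: "C \<subseteq> V" using gcube_V[OF c] .
  show "\<phi> g ` C \<subseteq> V" by (rule image_subsetI) (use CV inV[OF g] in blast)
  have "bij_betw (\<phi> g) C (\<phi> g ` C)" using inj_on_subset[OF injV[OF g] CV]
    unfolding bij_betw_def by blast
  then show "bij_betw (\<phi> g \<circ> f) (Pow I) (\<phi> g ` C)" using c unfolding gcube_def
    by (meson bij_betw_trans)
next
  fix x y assume xy: "x \<subseteq> I" "y \<subseteq> I"
  have "f x \<in> C" "f y \<in> C" using xy gcube_img[OF c] by blast+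
  then have "f x \<in> V" "f y \<in> V" using gcube_V[OF c] by blast+
  then show "E ((\<phi> g \<circ> f) x) ((\<phi> g \<circ> f) y) \<longleftrightarrow> card (sd x y) = 1"
    using actE_iff[OF g] gcube_E[OF c xy] by simp
qed

lemma facet_act: "g \<in> carrier G \<Longrightarrow> is_facet V E D C \<Longrightarrow> is_facet V E (\<phi> g ` D) (\<phi> g ` C)"
proof -
  assume g: "g \<in> carrier G" and "is_facet V E D C"
  then obtain k f i b where h: "cube_param V E k f C" "i < k" "D = f ` {x. x \<subseteq> {..<k} \<and> (i \<in> x \<longleftrightarrow> b)}"
    unfolding is_facet_def by blast
  have "cube_param V E k (\<phi> g \<circ> f) (\<phi> g ` C)" using gcube_act[OF g] h(1) unfolding cube_param_gcube by blast
  moreover have "\<phi> g ` D = (\<phi> g \<circ> f) ` {x. x \<subseteq> {..<k} \<and> (i \<in> x \<longleftrightarrow> b)}" using h(3) by (simp add: image_comp)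
  ultimately show ?thesis unfolding is_facet_def using h(2) by blast
qed

lemma adj_V: "subdiv_adj V E C D \<Longrightarrow> C \<subseteq> V \<and> D \<subseteq> V"
  unfolding subdiv_adj_def using facet_card by blast

lemma adj_act: "g \<in> carrier G \<Longrightarrow> subdiv_adj V E C D \<Longrightarrow> subdiv_adj V E (\<phi> g ` C) (\<phi> g ` D)"
  unfolding subdiv_adj_def using facet_act by blast

definition \<psi> :: "'g \<Rightarrow> 'v set set \<Rightarrow> 'v set set" where "\<psi> g x = (\<lambda>C. \<phi> g ` C) ` x"

lemma sqB_act: assumes g: "g \<in> carrier G" and s: "(x, y) \<in> sqB" shows "(\<psi> g x, \<psi> g y) \<in> sqB"
proof -
  obtain a b c d where h: "subdiv_adj V E a b" "subdiv_adj V E b c" "subdiv_adj V E c d" "subdiv_adj V E d a"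
    "distinct [a, b, c, d]" "x = {a, b}" "y = {d, c}" using s unfolding square_opp_def by blast
  have V: "a \<subseteq> V" "b \<subseteq> V" "c \<subseteq> V" "d \<subseteq> V" using adj_V h by blast+
  have "distinct [\<phi> g ` a, \<phi> g ` b, \<phi> g ` c, \<phi> g ` d]" using h(5) img_inj[OF g] V by simp
  moreover have "\<psi> g x = {\<phi> g ` a, \<phi> g ` b}" "\<psi> g y = {\<phi> g ` d, \<phi> g ` c}" using h by (simp_all add: \<psi>_def)
  ultimately show ?thesis using sq_intro adj_act[OF g] h by metis
qed

lemma sqB_rt_act: assumes g: "g \<in> carrier G" and xy: "(x, y) \<in> sqB\<^sup>*" shows "(\<psi> g x, \<psi> g y) \<in> sqB\<^sup>*"
  using xy
proof (induction rule: rtrancl_induct)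
  case base then show ?case by simp
next
  case (step y z) then show ?case using sqB_act[OF g] by (meson rtrancl.rtrancl_into_rtrancl)
qed

lemma sqB_sym: "(x, y) \<in> sqB\<^sup>* \<Longrightarrow> (y, x) \<in> sqB\<^sup>*"
  by (rule rtrancl_sym_rel) (use square_opp_sym[of "subdiv_adj V E"] in \<open>auto simp: subdiv_adj_def\<close>)
lemma sqX_sym: "(x, y) \<in> sqX\<^sup>* \<Longrightarrow> (y, x) \<in> sqX\<^sup>*"
  by (rule rtrancl_sym_rel) (use square_opp_sym[of E] E_sym in auto)


definition clsX :: "'v set \<Rightarrow> 'v set set" where "clsX e = {e'. (e, e') \<in> sqX\<^sup>*}"
definition clsB :: "'v set set \<Rightarrow> 'v set set set" where "clsB x = {y. (x, y) \<in> sqB\<^sup>*}"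
definition act1 :: "'g \<Rightarrow> 'v set set \<Rightarrow> 'v set set" where "act1 g Y = (\<lambda>e. \<phi> g ` e) ` Y"
definition act2 :: "'g \<Rightarrow> 'v set set set \<Rightarrow> 'v set set set" where "act2 g Z = (\<lambda>x. \<psi> g x) ` Z"

lemma stab1: "hyp_stab G \<phi> H = {g \<in> carrier G. act1 g H = H}" by (simp add: hyp_stab_def act1_def)
lemma stab2: "hyp_stab G (\<lambda>g C. \<phi> g ` C) Z = {g \<in> carrier G. act2 g Z = Z}"
  by (simp add: hyp_stab_def act2_def \<psi>_def)

lemma cls_edge: assumes e0: "E u0 v0" and e: "e \<in> clsX {u0, v0}" shows "\<exists>a b. E a b \<and> e = {a, b}"
proof -
  have "({u0, v0}, e) \<in> sqX\<^sup>*" using e by (simp add: clsX_def)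
  then show ?thesis
  proof (induction rule: rtrancl_induct)
    case base then show ?case using e0 by blast
  next
    case (step y z)
    obtain a b c d where "E a b" "E b c" "E c d" "E d a" "z = {d, c}" using sqX_elim[OF step(2)] by blast
    then show ?case by blast
  qed
qed

lemma pinv_edge: assumes e: "E u v" and P: "Pinv h {{u, v}, {u}}" shows "{u, v} \<in> h"
proof -
  from P[unfolded Pinv_def] obtain C D p q where
    cd0: "{{u, v}, {u}} = {C, D} \<and> is_facet V E D C \<and> crossing D C p q \<and> {p, q} \<in> h"
    by (elim exE) (rule that)
  then have cd: "{{u, v}, {u}} = {C, D}" "is_facet V E D C" "crossing D C p q" "{p, q} \<in> h" by blast+
  have "C = {u, v} \<and> D = {u}" using facet_pair[OF cd(2) edge_facet[OF e] cd(1)[symmetric]] .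
  then have "p = u" "q = v" using cd(3) unfolding crossing_def by auto
  then show ?thesis using cd(4) by simp
qed

lemma pinv_base: assumes e: "E u v" and h: "{u, v} \<in> h" shows "Pinv h {{u, v}, {u}}"
proof -
  have "crossing {u} {u, v} u v" unfolding crossing_def using e E_irr by auto
  then show ?thesis unfolding Pinv_def using edge_facet[OF e] h
    by (intro exI[of _ "{u, v}"] exI[of _ "{u}"] exI[of _ u] exI[of _ v]) simp
qed

lemma hcl: "hclosed (clsX e0)" unfolding hclosed_def clsX_def by (auto elim: rtrancl_trans)

definition good2 :: "'v set set set \<Rightarrow> bool" where "good2 Z \<longleftrightarrow> (\<forall>x\<in>Z. \<forall>C\<in>x. C \<subseteq> V)"

lemma good_clsB: assumes x0: "\<forall>C\<in>x0. C \<subseteq> V" shows "good2 (clsB x0)"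
proof -
  have "\<forall>C\<in>x. C \<subseteq> V" if "(x0, x) \<in> sqB\<^sup>*" for x
    using that
  proof (induction rule: rtrancl_induct)
    case base then show ?case using x0 .
  next
    case (step y z)
    obtain a b c d where "subdiv_adj V E c d" "z = {d, c}" using step(2) unfolding square_opp_def by blast
    then show ?case using adj_V by blast
  qed
  then show ?thesis unfolding good2_def clsB_def by blast
qed

lemma psi_comp: "g \<in> carrier G \<Longrightarrow> h \<in> carrier G \<Longrightarrow> \<forall>C\<in>x. C \<subseteq> V \<Longrightarrow> \<psi> (g \<otimes> h) x = \<psi> g (\<psi> h x)"
proof -
  assume g: "g \<in> carrier G" and h: "h \<in> carrier G" and x: "\<forall>C\<in>x. C \<subseteq> V"
  have "\<phi> (g \<otimes> h) ` C = \<phi> g ` \<phi> h ` C" if "C \<in> x" for C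
  proof -
    have "\<phi> (g \<otimes> h) ` C = (\<lambda>v. \<phi> g (\<phi> h v)) ` C" using comp[OF g h] x that by (intro image_cong) auto
    then show ?thesis by (simp add: image_image)
  qed
  then show ?thesis unfolding \<psi>_def by (simp add: image_image cong: image_cong)
qed

lemma psi_one: "\<forall>C\<in>x. C \<subseteq> V \<Longrightarrow> \<psi> \<one> x = x"
proof -
  assume x: "\<forall>C\<in>x. C \<subseteq> V"
  have "\<phi> \<one> ` C = C" if "C \<in> x" for C using one x that by (auto simp: image_iff) (metis subsetD)+
  then show ?thesis unfolding \<psi>_def by simp
qed

lemma psi_good: "g \<in> carrier G \<Longrightarrow> \<forall>C\<in>x. C \<subseteq> V \<Longrightarrow> \<forall>C\<in>\<psi> g x. C \<subseteq> V"
  unfolding \<psi>_def using inV by blast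

lemma psi_inv: "g \<in> carrier G \<Longrightarrow> \<forall>C\<in>x. C \<subseteq> V \<Longrightarrow> \<psi> (inv g) (\<psi> g x) = x"
  using psi_comp[of "inv g" g x] psi_one[of x] by simp

lemma act2_comp: "g \<in> carrier G \<Longrightarrow> h \<in> carrier G \<Longrightarrow> good2 Z \<Longrightarrow> act2 (g \<otimes> h) Z = act2 g (act2 h Z)"
  unfolding act2_def good2_def using psi_comp by (simp add: image_image cong: image_cong)

lemma act2_one: "good2 Z \<Longrightarrow> act2 \<one> Z = Z"
  unfolding act2_def good2_def using psi_one by simp

lemma act2_good: "g \<in> carrier G \<Longrightarrow> good2 Z \<Longrightarrow> good2 (act2 g Z)"
  unfolding act2_def good2_def using psi_good by blast

lemma act1_comp: "g \<in> carrier G \<Longrightarrow> h \<in> carrier G \<Longrightarrow> \<forall>e\<in>Y. e \<subseteq> V \<Longrightarrow> act1 (g \<otimes> h) Y = act1 g (act1 h Y)"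
  unfolding act1_def using psi_comp[unfolded \<psi>_def] by (simp add: image_image)

lemma act1_one: "\<forall>e\<in>Y. e \<subseteq> V \<Longrightarrow> act1 \<one> Y = Y"
  unfolding act1_def using psi_one[unfolded \<psi>_def] by simp

lemma act1_good: "g \<in> carrier G \<Longrightarrow> \<forall>e\<in>Y. e \<subseteq> V \<Longrightarrow> \<forall>e\<in>act1 g Y. e \<subseteq> V"
  unfolding act1_def using inV by blast

lemma stab1_inv: "\<forall>e\<in>Y. e \<subseteq> V \<Longrightarrow> g \<in> hyp_stab G \<phi> Y \<Longrightarrow> inv g \<in> hyp_stab G \<phi> Y"
proof -
  assume Y: "\<forall>e\<in>Y. e \<subseteq> V" and g: "g \<in> hyp_stab G \<phi> Y"
  then have gc: "g \<in> carrier G" and a: "act1 g Y = Y" by (auto simp: stab1)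
  have "act1 (inv g) Y = act1 (inv g) (act1 g Y)" using a by simp
  also have "\<dots> = act1 (inv g \<otimes> g) Y" using act1_comp[of "inv g" g Y] gc Y by simp
  also have "\<dots> = Y" using act1_one[OF Y] gc by simp
  finally show ?thesis using gc by (simp add: stab1)
qed

lemma stab2_inv: "good2 Z \<Longrightarrow> g \<in> hyp_stab G (\<lambda>g C. \<phi> g ` C) Z \<Longrightarrow> inv g \<in> hyp_stab G (\<lambda>g C. \<phi> g ` C) Z"
proof -
  assume Z: "good2 Z" and g: "g \<in> hyp_stab G (\<lambda>g C. \<phi> g ` C) Z"
  then have gc: "g \<in> carrier G" and a: "act2 g Z = Z" by (auto simp: stab2)
  have "act2 (inv g) Z = act2 (inv g) (act2 g Z)" using a by simp
  also have "\<dots> = act2 (inv g \<otimes> g) Z" using act2_comp[of "inv g" g Z] gc Z by simp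
  also have "\<dots> = Z" using act2_one[OF Z] gc by simp
  finally show ?thesis using gc by (simp add: stab2)
qed

lemma clsB_act: assumes g: "g \<in> carrier G" and x: "\<forall>C\<in>x. C \<subseteq> V"
  shows "act2 g (clsB x) = clsB (\<psi> g x)"
proof
  show "act2 g (clsB x) \<subseteq> clsB (\<psi> g x)"
    unfolding act2_def clsB_def using sqB_rt_act[OF g] by blast
  show "clsB (\<psi> g x) \<subseteq> act2 g (clsB x)"
  proof
    fix z assume z: "z \<in> clsB (\<psi> g x)"
    have gz: "\<forall>C\<in>z. C \<subseteq> V" using good_clsB[OF psi_good[OF g x]] z unfolding good2_def by blast
    have "(\<psi> (inv g) (\<psi> g x), \<psi> (inv g) z) \<in> sqB\<^sup>*" using z sqB_rt_act[of "inv g"] g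
      unfolding clsB_def by blast
    then have "\<psi> (inv g) z \<in> clsB x" using psi_inv[OF g x] unfolding clsB_def by simp
    moreover have "\<psi> g (\<psi> (inv g) z) = z" using psi_inv[of "inv g" z] g gz by simp
    ultimately show "z \<in> act2 g (clsB x)" unfolding act2_def by (metis image_eqI)
  qed
qed

lemma clsB_eq: "(x, y) \<in> sqB\<^sup>* \<Longrightarrow> clsB x = clsB y"
  unfolding clsB_def using sqB_sym by (blast intro: rtrancl_trans)


lemma core:
  assumes e0: "E u0 v0"
  defines "H \<equiv> clsX {u0, v0}" and "Hb \<equiv> clsB {{u0, v0}, {u0}}"
  shows "hyp_stab G (\<lambda>g C. \<phi> g ` C) Hb \<subseteq> hyp_stab G \<phi> H \<and>
    (\<exists>R. \<forall>a\<in>hyp_stab G \<phi> H. \<exists>b\<in>hyp_stab G (\<lambda>g C. \<phi> g ` C) Hb. d a b \<le> R)"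
proof -
  define x0 where "x0 = {{u0, v0}, {u0}}"
  define A where "A = hyp_stab G \<phi> H"
  define B where "B = hyp_stab G (\<lambda>g C. \<phi> g ` C) Hb"
  have uv0: "u0 \<in> V" "v0 \<in> V" using e0 E_V by auto
  have x0g: "\<forall>C\<in>x0. C \<subseteq> V" using uv0 unfolding x0_def by auto
  have Hbg: "good2 Hb" unfolding Hb_def using good_clsB x0g x0_def by simp
  have Hg: "\<forall>e\<in>H. e \<subseteq> V"
  proof
    fix e assume "e \<in> H"
    then obtain a b where "E a b" "e = {a, b}" using cls_edge[OF e0] H_def by blast
    then show "e \<subseteq> V" using E_V by auto
  qed
  have e0H: "{u0, v0} \<in> H" unfolding H_def clsX_def by simp
  have P0: "Pinv H x0" unfolding x0_def by (rule pinv_base[OF e0 e0H])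
  have hclH: "hclosed H" unfolding H_def by (rule hcl)
  have sub1: "act1 g H \<subseteq> H" if g: "g \<in> B" for g
  proof
    fix e' assume "e' \<in> act1 g H"
    then obtain e where e: "e \<in> H" "e' = \<phi> g ` e" unfolding act1_def by blast
    have gc: "g \<in> carrier G" and gHb: "act2 g Hb = Hb" using g unfolding B_def stab2 by auto
    obtain a b where ab: "E a b" "e = {a, b}" using cls_edge[OF e0] e H_def by blast
    have "({u0, v0}, e) \<in> sqX\<^sup>*" using e H_def clsX_def by simp
    then obtain u where u: "u \<in> e" "(x0, {e, {u}}) \<in> sqB\<^sup>*" using lift_rt[of "{u0, v0}" e u0] x0_def by auto
    obtain w where w: "E u w" "e = {u, w}" using ab u E_sym by (auto simp: insert_commute)
    have "{e, {u}} \<in> Hb" using u Hb_def clsB_def x0_def by simp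
    then have "\<psi> g {e, {u}} \<in> act2 g Hb" unfolding act2_def by blast
    then have "\<psi> g {e, {u}} \<in> Hb" using gHb by simp
    moreover have "\<psi> g {e, {u}} = {{\<phi> g u, \<phi> g w}, {\<phi> g u}}" using w by (simp add: \<psi>_def)
    ultimately have "(x0, {{\<phi> g u, \<phi> g w}, {\<phi> g u}}) \<in> sqB\<^sup>*" using Hb_def clsB_def x0_def by simp
    then have "Pinv H {{\<phi> g u, \<phi> g w}, {\<phi> g u}}" using Pinv_rtrancl hclH P0 by blast
    then have "{\<phi> g u, \<phi> g w} \<in> H" using pinv_edge actE[OF gc w(1)] by blast
    then show "e' \<in> H" using e w by simp
  qed
  have BA: "B \<subseteq> A"
  proof
    fix g assume g: "g \<in> B"
    then have gc: "g \<in> carrier G" unfolding B_def stab2 by auto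
    have ig: "inv g \<in> B" using stab2_inv[OF Hbg] g unfolding B_def by blast
    have "H \<subseteq> act1 g H"
    proof
      fix e assume e: "e \<in> H"
      then have "\<phi> (inv g) ` e \<in> H" using sub1[OF ig] unfolding act1_def by blast
      moreover have "\<phi> g ` \<phi> (inv g) ` e = e"
      proof -
        have "\<phi> g ` \<phi> (inv g) ` e = (\<lambda>v. \<phi> g (\<phi> (inv g) v)) ` e" by (simp add: image_image)
        also have "\<dots> = e" using inv_cancel2[OF gc] Hg e by (simp add: subset_iff cong: image_cong)
        finally show ?thesis .
      qed
      ultimately show "e \<in> act1 g H" unfolding act1_def by (metis image_eqI)
    qed
    then have "act1 g H = H" using sub1[OF g] by blast
    then show "g \<in> A" unfolding A_def stab1 using gc by simp
  qed
  define F where "F = {clsB x0, clsB {{u0, v0}, {v0}}}"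
  have inF: "act2 a Hb \<in> F" if a: "a \<in> A" for a
  proof -
    have ac: "a \<in> carrier G" and aH: "act1 a H = H" using a unfolding A_def stab1 by auto
    have "act2 a Hb = clsB (\<psi> a x0)" using clsB_act[OF ac x0g] Hb_def x0_def by simp
    also have "\<psi> a x0 = {\<phi> a ` {u0, v0}, {\<phi> a u0}}" by (simp add: \<psi>_def x0_def)
    finally have eq: "act2 a Hb = clsB {\<phi> a ` {u0, v0}, {\<phi> a u0}}" .
    have "\<phi> a ` {u0, v0} \<in> act1 a H" using e0H unfolding act1_def by blast
    then have "\<phi> a ` {u0, v0} \<in> H" using aH by simp
    then have "(\<phi> a ` {u0, v0}, {u0, v0}) \<in> sqX\<^sup>*" using sqX_sym H_def clsX_def by simp
    then obtain u' where u': "u' \<in> {u0, v0}" "({\<phi> a ` {u0, v0}, {\<phi> a u0}}, {{u0, v0}, {u'}}) \<in> sqB\<^sup>*"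
      using lift_rt[of "\<phi> a ` {u0, v0}" "{u0, v0}" "\<phi> a u0"] by blast
    then have "act2 a Hb = clsB {{u0, v0}, {u'}}" using eq clsB_eq by simp
    then show ?thesis using u'(1) unfolding F_def x0_def by auto
  qed
  have Ac: "A \<subseteq> carrier G" unfolding A_def stab1 by auto
  have Ainv: "inv a \<in> A" if "a \<in> A" for a using stab1_inv[OF Hg] that unfolding A_def by blast
  define rep where "rep y = (SOME t. t \<in> A \<and> act2 (inv t) Hb = y)" for y
  define R where "R = len (rep (clsB x0)) + len (rep (clsB {{u0, v0}, {v0}}))"
  have close: "\<exists>b\<in>B. d a b \<le> R" if a: "a \<in> A" for a
  proof -
    have ac: "a \<in> carrier G" using a Ac by blast
    define y where "y = act2 (inv a) Hb"
    have yF: "y \<in> F" using inF[OF Ainv[OF a]] y_def by simp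
    have "\<exists>t. t \<in> A \<and> act2 (inv t) Hb = y" using a y_def by blast
    then have t: "rep y \<in> A" "act2 (inv (rep y)) Hb = y" unfolding rep_def by (metis (mono_tags, lifting) someI_ex)+
    define t where "t = rep y"
    have tc: "t \<in> carrier G" using t Ac t_def by blast
    define b where "b = a \<otimes> inv t"
    have bc: "b \<in> carrier G" using ac tc b_def by simp
    have "act2 b Hb = act2 a (act2 (inv t) Hb)" using act2_comp[OF ac _ Hbg] tc b_def by simp
    also have "\<dots> = act2 a (act2 (inv a) Hb)" using t t_def y_def by simp
    also have "\<dots> = act2 (a \<otimes> inv a) Hb" using act2_comp[OF ac _ Hbg, of "inv a"] ac by simp
    also have "\<dots> = Hb" using act2_one[OF Hbg] ac by simp
    finally have bB: "b \<in> B" unfolding B_def stab2 using bc by simp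
    have "d a b = len (inv t)" unfolding d_def b_def using ac tc by (simp add: m_assoc[symmetric])
    also have "\<dots> = len t" using len_inv tc by simp
    also have "\<dots> \<le> R" using yF unfolding R_def F_def t_def by auto
    finally show ?thesis using bB by blast
  qed
  show ?thesis using BA close unfolding A_def B_def by blast
qed


lemma hypX: "H \<in> hyperplanes E \<longleftrightarrow> (\<exists>u v. E u v \<and> H = clsX {u, v})"
  unfolding hyperplanes_def edges_def clsX_def by blast

lemma hypB: "Hb \<in> hyperplanes (subdiv_adj V E) \<longleftrightarrow> (\<exists>C D. subdiv_adj V E C D \<and> Hb = clsB {C, D})"
  unfolding hyperplanes_def edges_def clsB_def by blast

lemma main:
  assumes hyp: "hyperbolic_wrt G S"
  shows "(\<forall>H \<in> hyperplanes E. quasiconvex G S (hyp_stab G \<phi> H)) \<longleftrightarrow>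
         (\<forall>H \<in> hyperplanes (subdiv_adj V E). quasiconvex G S (hyp_stab G (\<lambda>g C. \<phi> g ` C) H))"
proof
  assume L: "\<forall>H \<in> hyperplanes E. quasiconvex G S (hyp_stab G \<phi> H)"
  show "\<forall>H \<in> hyperplanes (subdiv_adj V E). quasiconvex G S (hyp_stab G (\<lambda>g C. \<phi> g ` C) H)"
  proof
    fix Hb assume "Hb \<in> hyperplanes (subdiv_adj V E)"
    then obtain C D where CD: "subdiv_adj V E C D" "Hb = clsB {C, D}" using hypB by blast
    obtain u v where uv: "E u v" "({C, D}, {{u, v}, {u}}) \<in> sqB\<^sup>*" using base_form[OF CD(1)] by blast
    have Hb: "Hb = clsB {{u, v}, {u}}" using CD(2) clsB_eq[OF uv(2)] by simp
    have "clsX {u, v} \<in> hyperplanes E" using hypX uv by blast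
    then have qA: "quasiconvex G S (hyp_stab G \<phi> (clsX {u, v}))" using L by blast
    obtain R where c: "hyp_stab G (\<lambda>g C. \<phi> g ` C) Hb \<subseteq> hyp_stab G \<phi> (clsX {u, v})"
      "\<forall>a\<in>hyp_stab G \<phi> (clsX {u, v}). \<exists>b\<in>hyp_stab G (\<lambda>g C. \<phi> g ` C) Hb. d a b \<le> R"
      using core[OF uv(1)] Hb by blast
    have Ac: "hyp_stab G \<phi> (clsX {u, v}) \<subseteq> carrier G" unfolding stab1 by auto
    show "quasiconvex G S (hyp_stab G (\<lambda>g C. \<phi> g ` C) Hb)" using qc_transfer[OF hyp c(1) Ac c(2)] qA by blast
  qed
next
  assume L: "\<forall>H \<in> hyperplanes (subdiv_adj V E). quasiconvex G S (hyp_stab G (\<lambda>g C. \<phi> g ` C) H)"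
  show "\<forall>H \<in> hyperplanes E. quasiconvex G S (hyp_stab G \<phi> H)"
  proof
    fix H assume "H \<in> hyperplanes E"
    then obtain u v where uv: "E u v" "H = clsX {u, v}" using hypX by blast
    have "subdiv_adj V E {u, v} {u}" using edge_facet[OF uv(1)] unfolding subdiv_adj_def by blast
    then have "clsB {{u, v}, {u}} \<in> hyperplanes (subdiv_adj V E)" using hypB by blast
    then have qB: "quasiconvex G S (hyp_stab G (\<lambda>g C. \<phi> g ` C) (clsB {{u, v}, {u}}))" using L by blast
    obtain R where c: "hyp_stab G (\<lambda>g C. \<phi> g ` C) (clsB {{u, v}, {u}}) \<subseteq> hyp_stab G \<phi> H"
      "\<forall>a\<in>hyp_stab G \<phi> H. \<exists>b\<in>hyp_stab G (\<lambda>g C. \<phi> g ` C) (clsB {{u, v}, {u}}). d a b \<le> R"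
      using core[OF uv(1)] uv(2) by blast
    have Ac: "hyp_stab G \<phi> H \<subseteq> carrier G" unfolding stab1 by auto
    show "quasiconvex G S (hyp_stab G \<phi> H)" using qc_transfer[OF hyp c(1) Ac c(2)] qB by blast
  qed
qed

end

theorem lemma3p4:
  fixes G :: "('g, 'b) monoid_scheme" and S :: "'g set"
    and V :: "'v set" and E :: "'v \<Rightarrow> 'v \<Rightarrow> bool" and \<phi> :: "'g \<Rightarrow> 'v \<Rightarrow> 'v"
  assumes "group G"
    and "fin_gen_set G S"
    and "hyperbolic_wrt G S"
    and "median_graph V E"
    and "cubical_action G V E \<phi>"
  shows "(\<forall>H \<in> hyperplanes E. quasiconvex G S (hyp_stab G \<phi> H)) \<longleftrightarrow>
         (\<forall>H \<in> hyperplanes (subdiv_adj V E).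
             quasiconvex G S (hyp_stab G (\<lambda>g C. \<phi> g ` C) H))"
proof -
  interpret s: setting V E G S \<phi>
    using assms unfolding setting_def setting_axioms_def mg_def wg_def wg_axioms_def by blast
  show ?thesis using s.main[OF assms(3)] .
qed

end
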